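(* Let $\lambda\ge 2$ be an integer. For every $f\in\mathcal{F}_{1,1}$ and every $\epsilon\in(0,1)$ there is a ReLU network (whose topology may depend on $f$) with all weights taken from $\{-1,\frac{1}{\lambda},\frac{2}{\lambda},\dots,\frac{\lambda-1}{\lambda}\}$ whose output $f''$ satisfies $\sup_{x\in[0,1]}|f''(x)-f(x)|\le\epsilon$, and such that: (i) the depth is $\mathcal{O}(\log(1/\epsilon))$; (ii) the number of weights is $\mathcal{O}(1/\epsilon)$; (iii) the number of bits needed to store the network is $\mathcal{O}(\log(\lambda)/\epsilon)$.
   Context: A ReLU network is a feedforward network with activation $\sigma(x)=\max(0,x)$, one input unit, hidden units and one output unit, where each unit connects only to units in the next layer; depth is the number of layers. Each weight is stored with $\log_2\lambda$ bits. $\mathcal{F}_{1,1}$ is the set of functions $f\in\mathscr{W}^{1,\infty}([0,1])$ with $\operatorname{ess\,sup}|f|\le1$ and $\operatorname{ess\,sup}|f'|\le 1$. All logarithms are base 2. *)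

theory Defs
  imports "HOL-Analysis.Analysis"
begin

text \<open>The class F_{1,1}: f in W^{1,inf}([0,1]) with ess sup |f| <= 1 and ess sup |f'| <= 1.
  In one dimension a function lies in W^{1,inf}([0,1]) iff (its representative) is an
  indefinite integral of an essentially bounded function g, which is the weak derivative.\<close>
definition F11 :: "(real \<Rightarrow> real) set" where
  "F11 = {f. (\<exists>g. g integrable_on {0..1} \<and>
                  (\<forall>x\<in>{0..1}. (g has_integral (f x - f 0)) {0..x}) \<and>
                  (AE x in lebesgue. x \<in> {0..1} \<longrightarrow> \<bar>g x\<bar> \<le> 1)) \<and>
             (AE x in lebesgue. x \<in> {0..1} \<longrightarrow> \<bar>f x\<bar> \<le> 1)}"

definition relu :: "real \<Rightarrow> real" where
  "relu x = max 0 x"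

text \<open>A layer is (number of input units, number of output units, weight matrix, bias vector).
  A zero entry means "no connection"; the number of weights counts the nonzero entries.\<close>
type_synonym layer = "nat \<times> nat \<times> (nat \<Rightarrow> nat \<Rightarrow> real) \<times> (nat \<Rightarrow> real)"

definition layer_din :: "layer \<Rightarrow> nat" where "layer_din L = fst L"
definition layer_dout :: "layer \<Rightarrow> nat" where "layer_dout L = fst (snd L)"
definition layer_W :: "layer \<Rightarrow> nat \<Rightarrow> nat \<Rightarrow> real" where "layer_W L = fst (snd (snd L))"
definition layer_b :: "layer \<Rightarrow> nat \<Rightarrow> real" where "layer_b L = snd (snd (snd L))"

definition affine :: "layer \<Rightarrow> (nat \<Rightarrow> real) \<Rightarrow> (nat \<Rightarrow> real)" where
  "affine L x = (\<lambda>j. if j < layer_dout L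
      then (\<Sum>i<layer_din L. layer_W L j i * x i) + layer_b L j else 0)"

fun net_eval :: "layer list \<Rightarrow> (nat \<Rightarrow> real) \<Rightarrow> (nat \<Rightarrow> real)" where
  "net_eval [] x = x"
| "net_eval [L] x = affine L x"
| "net_eval (L # M # Ls) x = net_eval (M # Ls) (\<lambda>j. relu (affine L x j))"

definition relu_net :: "layer list \<Rightarrow> bool" where
  "relu_net N \<longleftrightarrow> N \<noteq> [] \<and> layer_din (hd N) = 1 \<and> layer_dout (last N) = 1 \<and>
     (\<forall>k. Suc k < length N \<longrightarrow> layer_dout (N ! k) = layer_din (N ! Suc k))"

definition realize :: "layer list \<Rightarrow> real \<Rightarrow> real" where
  "realize N x = net_eval N (\<lambda>i. if i = 0 then x else 0) 0"

definition depth :: "layer list \<Rightarrow> nat" where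
  "depth N = length N"

definition layer_num_weights :: "layer \<Rightarrow> nat" where
  "layer_num_weights L =
     card {(j, i). j < layer_dout L \<and> i < layer_din L \<and> layer_W L j i \<noteq> 0}
   + card {j. j < layer_dout L \<and> layer_b L j \<noteq> 0}"

definition num_weights :: "layer list \<Rightarrow> nat" where
  "num_weights N = (\<Sum>L\<leftarrow>N. layer_num_weights L)"

definition weights_in :: "real set \<Rightarrow> layer list \<Rightarrow> bool" where
  "weights_in S N \<longleftrightarrow> (\<forall>L\<in>set N.
      (\<forall>j i. j < layer_dout L \<and> i < layer_din L \<and> layer_W L j i \<noteq> 0 \<longrightarrow> layer_W L j i \<in> S) \<and>
      (\<forall>j. j < layer_dout L \<and> layer_b L j \<noteq> 0 \<longrightarrow> layer_b L j \<in> S))"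

definition quant_weights :: "nat \<Rightarrow> real set" where
  "quant_weights lam = insert (-1) {real k / real lam | k. 1 \<le> k \<and> k \<le> lam - 1}"

definition num_bits :: "nat \<Rightarrow> layer list \<Rightarrow> real" where
  "num_bits lam N = real (num_weights N) * log 2 (real lam)"

end

theory Submission
  imports Defs
begin


type_synonym uspec = "real \<times> (nat \<times> real) list"

definition lin :: "real list \<Rightarrow> uspec list \<Rightarrow> real list" where
  "lin v us = map (\<lambda>u. fst u + sum_list (map (\<lambda>e. snd e * v ! fst e) (snd u))) us"

definition hstep :: "real list \<Rightarrow> uspec list \<Rightarrow> real list" where
  "hstep v us = map relu (lin v us)"

definition hev :: "real list \<Rightarrow> uspec list list \<Rightarrow> real list" where
  "hev v uss = fold (\<lambda>us w. hstep w us) uss v"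

fun neval :: "real list \<Rightarrow> uspec list list \<Rightarrow> real list" where
  "neval v [] = v"
| "neval v [us] = lin v us"
| "neval v (us # vs # r) = neval (hstep v us) (vs # r)"

lemma neval_snoc: "neval v (uss @ [us]) = lin (hev v uss) us"
proof (induction uss arbitrary: v)
  case Nil thus ?case by (simp add: hev_def)
next
  case (Cons a uss)
  show ?case
  proof (cases uss)
    case Nil thus ?thesis by (simp add: hev_def)
  next
    case (Cons b r)
    have "neval v ((a # uss) @ [us]) = neval (hstep v a) (uss @ [us])"
      using Cons by simp
    thus ?thesis using Cons.IH by (simp add: hev_def)
  qed
qed

lemma hev_append: "hev v (A @ B) = hev (hev v A) B"
  by (simp add: hev_def)

lemma hev_Cons: "hev v (a # B) = hev (hstep v a) B"
  by (simp add: hev_def)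

definition wmat :: "uspec list \<Rightarrow> nat \<Rightarrow> nat \<Rightarrow> real" where
  "wmat us j i = (if j < length us then sum_list (map (\<lambda>e. if fst e = i then snd e else 0) (snd (us ! j))) else 0)"

definition mk_layer :: "nat \<Rightarrow> uspec list \<Rightarrow> layer" where
  "mk_layer d us = (d, length us, wmat us, \<lambda>j. if j < length us then fst (us ! j) else 0)"

fun mknet :: "nat \<Rightarrow> uspec list list \<Rightarrow> layer list" where
  "mknet d [] = []"
| "mknet d (us # r) = mk_layer d us # mknet (length us) r"

definition tofun :: "real list \<Rightarrow> nat \<Rightarrow> real" where
  "tofun v = (\<lambda>i. if i < length v then v ! i else 0)"

fun wfn :: "nat \<Rightarrow> uspec list list \<Rightarrow> bool" where
  "wfn d [] = True"
| "wfn d (us # r) = ((\<forall>u\<in>set us. \<forall>e\<in>set (snd u). fst e < d) \<and> wfn (length us) r)"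

lemma sum_edges:
  fixes es :: "(nat \<times> real) list"
  assumes "\<forall>e\<in>set es. fst e < n"
  shows "(\<Sum>i<n. sum_list (map (\<lambda>e. if fst e = i then snd e else 0) es) * g i)
       = sum_list (map (\<lambda>e. snd e * g (fst e)) es)"
  using assms
proof (induction es)
  case Nil thus ?case by simp
next
  case (Cons e es)
  have "(\<Sum>i<n. sum_list (map (\<lambda>e. if fst e = i then snd e else 0) (e # es)) * g i)
      = (\<Sum>i<n. (if fst e = i then snd e else 0) * g i)
        + (\<Sum>i<n. sum_list (map (\<lambda>e. if fst e = i then snd e else 0) es) * g i)"
    by (simp add: distrib_right sum.distrib)
  also have "(\<Sum>i<n. (if fst e = i then snd e else 0) * g i) = snd e * g (fst e)"
  proof -
    have "(\<Sum>i<n. (if fst e = i then snd e else 0) * g i) = (\<Sum>i<n. if fst e = i then snd e * g i else 0)"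
      by (rule sum.cong) auto
    also have "\<dots> = snd e * g (fst e)" using Cons.prems by (simp add: sum.delta)
    finally show ?thesis .
  qed
  finally show ?case using Cons by simp
qed

lemma affine_mk:
  assumes "\<forall>u\<in>set us. \<forall>e\<in>set (snd u). fst e < length v"
  shows "affine (mk_layer (length v) us) (tofun v) = tofun (lin v us)"
proof
  fix j
  show "affine (mk_layer (length v) us) (tofun v) j = tofun (lin v us) j"
  proof (cases "j < length us")
    case True
    have us: "us ! j \<in> set us" using True by simp
    have "(\<Sum>i<length v. wmat us j i * tofun v i)
        = (\<Sum>i<length v. sum_list (map (\<lambda>e. if fst e = i then snd e else 0) (snd (us ! j))) * (v ! i))"
      by (rule sum.cong) (auto simp: wmat_def tofun_def True)
    also have "\<dots> = sum_list (map (\<lambda>e. snd e * v ! fst e) (snd (us ! j)))"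
      by (rule sum_edges) (use assms us in blast)
    finally show ?thesis using True
      by (simp add: affine_def mk_layer_def layer_dout_def layer_din_def layer_W_def layer_b_def
          tofun_def lin_def)
  next
    case False thus ?thesis
      by (simp add: affine_def mk_layer_def layer_dout_def tofun_def lin_def)
  qed
qed

lemma relu_tofun: "(\<lambda>j. relu (tofun w j)) = tofun (map relu w)"
  by (auto simp: tofun_def relu_def fun_eq_iff)

lemma length_lin[simp]: "length (lin v us) = length us"
  by (simp add: lin_def)

lemma length_hstep[simp]: "length (hstep v us) = length us"
  by (simp add: hstep_def)

lemma net_eval_mk:
  "wfn (length v) uss \<Longrightarrow> uss \<noteq> [] \<Longrightarrow>
   net_eval (mknet (length v) uss) (tofun v) = tofun (neval v uss)"
proof (induction v uss rule: neval.induct)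
  case (1 v) thus ?case by simp
next
  case (2 v us) thus ?case by (simp add: affine_mk)
next
  case (3 v us vs r)
  have "net_eval (mknet (length v) (us # vs # r)) (tofun v)
      = net_eval (mknet (length us) (vs # r)) (\<lambda>j. relu (affine (mk_layer (length v) us) (tofun v) j))"
    by simp
  also have "(\<lambda>j. relu (affine (mk_layer (length v) us) (tofun v) j)) = tofun (hstep v us)"
    using 3(2) by (simp add: affine_mk relu_tofun hstep_def)
  also have "net_eval (mknet (length us) (vs # r)) (tofun (hstep v us)) = tofun (neval (hstep v us) (vs # r))"
    using 3 by simp
  finally show ?case by simp
qed

lemma realize_mk:
  assumes "wfn 1 uss" "uss \<noteq> []"
  shows "realize (mknet 1 uss) x = tofun (neval [x] uss) 0"
proof -
  have "(\<lambda>i. if i = 0 then x else 0) = tofun [x]" by (auto simp: tofun_def fun_eq_iff)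
  thus ?thesis using net_eval_mk[of "[x]" uss] assms by (simp add: realize_def)
qed

lemma length_mknet[simp]: "length (mknet d uss) = length uss"
  by (induction d uss rule: mknet.induct) auto

lemma mknet_chain:
  "\<forall>k. Suc k < length (mknet d uss) \<longrightarrow> layer_dout (mknet d uss ! k) = layer_din (mknet d uss ! Suc k)"
proof (induction d uss rule: mknet.induct)
  case (1 d) thus ?case by simp
next
  case (2 d us r)
  show ?case
  proof (intro allI impI)
    fix k assume k: "Suc k < length (mknet d (us # r))"
    show "layer_dout (mknet d (us # r) ! k) = layer_din (mknet d (us # r) ! Suc k)"
    proof (cases k)
      case 0
      then obtain us' r' where "r = us' # r'" using k by (cases r) auto
      thus ?thesis using 0 by (simp add: mk_layer_def layer_dout_def layer_din_def)
    next
      case (Suc k') thus ?thesis using 2 k by simp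
    qed
  qed
qed

lemma last_mknet: "uss \<noteq> [] \<Longrightarrow> last (mknet d uss) = mk_layer (if length uss = 1 then d else length (uss ! (length uss - 2))) (last uss)"
proof (induction d uss rule: mknet.induct)
  case (1 d) thus ?case by simp
next
  case (2 d us r)
  show ?case
  proof (cases r)
    case Nil thus ?thesis by simp
  next
    case (Cons a r')
    thus ?thesis using 2 by (auto simp: nth_Cons' split: if_splits)
  qed
qed

lemma relu_net_mk:
  assumes "uss \<noteq> []" "length (last uss) = 1"
  shows "relu_net (mknet 1 uss)"
proof -
  have "mknet 1 uss \<noteq> []" using assms by (cases uss) auto
  moreover have "layer_din (hd (mknet 1 uss)) = 1" using assms
    by (cases uss) (auto simp: mk_layer_def layer_din_def)
  moreover have "layer_dout (last (mknet 1 uss)) = 1"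
    using assms by (simp add: last_mknet mk_layer_def layer_dout_def)
  ultimately show ?thesis using mknet_chain unfolding relu_net_def by blast
qed

lemma sl0: "(\<forall>x\<in>set xs. f x = (0::real)) \<Longrightarrow> sum_list (map f xs) = 0"
  by (induction xs) auto

definition ucost :: "uspec \<Rightarrow> nat" where
  "ucost u = length (snd u) + (if fst u = 0 then 0 else 1)"

definition lcost :: "uspec list \<Rightarrow> nat" where
  "lcost us = sum_list (map ucost us)"

lemma lnw_mk: "layer_num_weights (mk_layer d us) \<le> lcost us"
proof -
  let ?n = "length us"
  have s1: "{(j, i). j < ?n \<and> i < d \<and> wmat us j i \<noteq> 0} \<subseteq> (\<Union>j<?n. (\<lambda>e. (j, fst e)) ` set (snd (us ! j)))"
  proof
    fix p assume "p \<in> {(j, i). j < ?n \<and> i < d \<and> wmat us j i \<noteq> 0}"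
    then obtain j i where p: "p = (j, i)" "j < ?n" "wmat us j i \<noteq> 0" by auto
    have "\<exists>e\<in>set (snd (us ! j)). fst e = i"
    proof (rule ccontr)
      assume "\<not> ?thesis"
      hence "wmat us j i = 0" using p by (auto simp: wmat_def intro!: sl0)
      thus False using p by simp
    qed
    thus "p \<in> (\<Union>j<?n. (\<lambda>e. (j, fst e)) ` set (snd (us ! j)))" using p by force
  qed
  have "card {(j, i). j < ?n \<and> i < d \<and> wmat us j i \<noteq> 0} \<le> card (\<Union>j<?n. (\<lambda>e. (j, fst e)) ` set (snd (us ! j)))"
    by (rule card_mono[OF _ s1]) auto
  also have "\<dots> \<le> (\<Sum>j<?n. card ((\<lambda>e. (j, fst e)) ` set (snd (us ! j))))"
    by (rule card_UN_le) auto
  also have "\<dots> \<le> (\<Sum>j<?n. length (snd (us ! j)))"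
    by (rule sum_mono) (meson card_image_le card_length finite_set le_trans)
  finally have c1: "card {(j, i). j < ?n \<and> i < d \<and> wmat us j i \<noteq> 0} \<le> (\<Sum>j<?n. length (snd (us ! j)))" .
  have "{j. j < ?n \<and> (if j < ?n then fst (us ! j) else 0) \<noteq> 0} = {j\<in>{..<?n}. fst (us ! j) \<noteq> 0}" by auto
  moreover have "(\<Sum>j<?n. if fst (us ! j) = 0 then 0 else 1::nat) = sum (\<lambda>_. 1) {j\<in>{..<?n}. fst (us!j) \<noteq> 0}"
    by (subst sum.inter_filter) (auto intro: sum.cong)
  ultimately have c2: "card {j. j < ?n \<and> (if j < ?n then fst (us ! j) else 0) \<noteq> 0} = (\<Sum>j<?n. if fst (us ! j) = 0 then 0 else 1)"
    by simp
  have "lcost us = (\<Sum>j<?n. ucost (us ! j))"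
    unfolding lcost_def by (simp add: sum_list_sum_nth atLeast0LessThan)
  also have "\<dots> = (\<Sum>j<?n. length (snd (us ! j))) + (\<Sum>j<?n. if fst (us ! j) = 0 then 0 else 1)"
    by (simp add: ucost_def sum.distrib)
  finally have c3: "lcost us = (\<Sum>j<?n. length (snd (us ! j))) + (\<Sum>j<?n. if fst (us ! j) = 0 then 0 else 1)" .
  have "layer_num_weights (mk_layer d us) = card {(j, i). j < ?n \<and> i < d \<and> wmat us j i \<noteq> 0}
     + card {j. j < ?n \<and> (if j < ?n then fst (us ! j) else 0) \<noteq> 0}"
    unfolding layer_num_weights_def mk_layer_def layer_dout_def layer_din_def layer_W_def layer_b_def
    by (simp only: fst_conv snd_conv)
  thus ?thesis using c1 c2 c3 by linarith
qed

lemma num_weights_mk: "num_weights (mknet d uss) \<le> sum_list (map lcost uss)"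
proof (induction d uss rule: mknet.induct)
  case (1 d) thus ?case by (simp add: num_weights_def)
next
  case (2 d us r)
  thus ?case using lnw_mk[of d us] by (simp add: num_weights_def)
qed

definition goodu :: "real set \<Rightarrow> uspec \<Rightarrow> bool" where
  "goodu S u \<longleftrightarrow> (fst u \<noteq> 0 \<longrightarrow> fst u \<in> S) \<and> distinct (map fst (snd u)) \<and> (\<forall>e\<in>set (snd u). snd e \<in> S)"

lemma sum_distinct_edge:
  fixes es :: "(nat \<times> real) list"
  assumes "distinct (map fst es)" "\<forall>e\<in>set es. snd e \<in> S"
    "sum_list (map (\<lambda>e. if fst e = i then snd e else 0) es) \<noteq> 0"
  shows "sum_list (map (\<lambda>e. if fst e = i then snd e else 0) es) \<in> S"
  using assms
proof (induction es)
  case Nil thus ?case by simp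
next
  case (Cons e es)
  show ?case
  proof (cases "fst e = i")
    case True
    hence "sum_list (map (\<lambda>e. if fst e = i then snd e else (0::real)) es) = 0"
      using Cons.prems(1) by (auto simp: image_iff intro!: sl0)
    thus ?thesis using True Cons.prems by simp
  next
    case False thus ?thesis using Cons by simp
  qed
qed

lemma weights_in_mk:
  assumes "\<forall>us\<in>set uss. \<forall>u\<in>set us. goodu S u"
  shows "weights_in S (mknet d uss)"
  using assms
proof (induction d uss rule: mknet.induct)
  case (1 d) thus ?case by (simp add: weights_in_def)
next
  case (2 d us r)
  have "\<forall>j i. j < length us \<and> i < d \<and> wmat us j i \<noteq> 0 \<longrightarrow> wmat us j i \<in> S"
  proof (intro allI impI)
    fix j i assume h: "j < length us \<and> i < d \<and> wmat us j i \<noteq> 0"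
    hence g: "goodu S (us ! j)" using 2(2) by simp
    have ne: "sum_list (map (\<lambda>e. if fst e = i then snd e else 0) (snd (us ! j))) \<noteq> 0"
      using h unfolding wmat_def by (metis (no_types, lifting))
    have "sum_list (map (\<lambda>e. if fst e = i then snd e else 0) (snd (us ! j))) \<in> S"
      by (rule sum_distinct_edge[OF _ _ ne]) (use g in \<open>simp_all add: goodu_def\<close>)
    thus "wmat us j i \<in> S" using h unfolding wmat_def by (metis (no_types, lifting))
  qed
  moreover have "\<forall>j. j < length us \<and> fst (us ! j) \<noteq> 0 \<longrightarrow> fst (us ! j) \<in> S"
    using 2(2) by (simp add: goodu_def)
  ultimately have A: "\<forall>j i. j < layer_dout (mk_layer d us) \<and> i < layer_din (mk_layer d us) \<and> layer_W (mk_layer d us) j i \<noteq> 0 \<longrightarrow> layer_W (mk_layer d us) j i \<in> S"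
     and B: "\<forall>j. j < layer_dout (mk_layer d us) \<and> layer_b (mk_layer d us) j \<noteq> 0 \<longrightarrow> layer_b (mk_layer d us) j \<in> S"
    unfolding mk_layer_def layer_dout_def layer_din_def layer_W_def layer_b_def by simp_all
  have IH: "weights_in S (mknet (length us) r)" using 2 by simp
  have "mknet d (us # r) = mk_layer d us # mknet (length us) r" by simp
  thus ?case using A B IH unfolding weights_in_def by (metis set_ConsD)
qed


definition rho :: "nat \<Rightarrow> real" where "rho lam = real (lam - 1) / real lam"

definition hv :: "nat \<Rightarrow> nat \<Rightarrow> nat \<Rightarrow> real" where
  "hv lam N t = real (N mod lam ^ t) / real (lam ^ t)"

definition dig :: "nat \<Rightarrow> nat \<Rightarrow> nat \<Rightarrow> nat" where
  "dig lam N t = N div lam ^ t mod lam"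

definition hu :: "nat \<Rightarrow> nat list \<Rightarrow> nat \<Rightarrow> uspec list" where
  "hu lam Ns t = map (\<lambda>h. (real (dig lam (Ns ! h) (t - 1)) / real lam,
      if t = Suc 0 then [] else [(h, 1 / real lam)])) [0..<length Ns]"

lemma hv_nonneg: "hv lam N t \<ge> 0" by (simp add: hv_def)

lemma relu_id: "x \<ge> 0 \<Longrightarrow> relu x = x" by (simp add: relu_def)
lemma relu_nonneg: "relu x \<ge> 0" by (simp add: relu_def)

lemma hv_Suc:
  assumes "lam \<ge> 2"
  shows "hv lam N (Suc t) = real (dig lam N t) / real lam + 1 / real lam * hv lam N t"
proof -
  have "N mod (lam ^ t * lam) = lam ^ t * (N div lam ^ t mod lam) + N mod lam ^ t"
    by (rule mod_mult2_eq)
  hence "N mod lam ^ Suc t = lam ^ t * dig lam N t + N mod lam ^ t"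
    by (metis dig_def power_Suc2)
  hence e: "real (N mod lam ^ Suc t) = real (lam ^ t) * real (dig lam N t) + real (N mod lam ^ t)"
    by (metis of_nat_add of_nat_mult)
  have pos: "real lam > 0" "real (lam ^ t) > 0" using assms by auto
  show ?thesis unfolding hv_def e using pos
    by (simp add: field_simps power_Suc2)
qed

lemma hv_1: "lam \<ge> 2 \<Longrightarrow> hv lam N 1 = real (dig lam N 0) / real lam"
  by (simp add: hv_def dig_def)

lemma hstep_append: "hstep v (A @ B) = hstep v A @ hstep v B"
  by (simp add: hstep_def lin_def)

lemma hstep_hu:
  assumes "t \<ge> 1" "\<forall>h<length Ns. v ! h = hv lam (Ns ! h) t" "lam \<ge> 2"
  shows "hstep v (hu lam Ns (Suc t)) = map (\<lambda>N. hv lam N (Suc t)) Ns"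
proof (rule nth_equalityI)
  show "length (hstep v (hu lam Ns (Suc t))) = length (map (\<lambda>N. hv lam N (Suc t)) Ns)"
    by (simp add: hu_def)
next
  fix h assume "h < length (hstep v (hu lam Ns (Suc t)))"
  hence h: "h < length Ns" by (simp add: hu_def)
  have "hstep v (hu lam Ns (Suc t)) ! h = relu (real (dig lam (Ns ! h) t) / real lam + 1 / real lam * hv lam (Ns ! h) t)"
    using h assms by (simp add: hstep_def lin_def hu_def)
  also have "\<dots> = hv lam (Ns ! h) (Suc t)"
    using hv_Suc[OF assms(3)] hv_nonneg by (metis relu_id)
  finally show "hstep v (hu lam Ns (Suc t)) ! h = map (\<lambda>N. hv lam N (Suc t)) Ns ! h"
    using h by simp
qed

lemma hstep_hu1:
  assumes "lam \<ge> 2"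
  shows "hstep v (hu lam Ns 1) = map (\<lambda>N. hv lam N 1) Ns"
proof (rule nth_equalityI)
  show "length (hstep v (hu lam Ns 1)) = length (map (\<lambda>N. hv lam N 1) Ns)"
    by (simp add: hu_def)
next
  fix h assume "h < length (hstep v (hu lam Ns 1))"
  hence h: "h < length Ns" by (simp add: hu_def)
  have "hstep v (hu lam Ns 1) ! h = relu (real (dig lam (Ns ! h) 0) / real lam)"
    using h by (simp add: hstep_def lin_def hu_def)
  also have "\<dots> = hv lam (Ns ! h) 1"
    using hv_1[OF assms] hv_nonneg by (metis relu_id)
  finally show "hstep v (hu lam Ns 1) ! h = map (\<lambda>N. hv lam N 1) Ns ! h"
    using h by simp
qed

definition nodeval :: "nat \<Rightarrow> real \<Rightarrow> real \<Rightarrow> nat \<times> real \<Rightarrow> real" where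
  "nodeval lam x \<delta> l = rho lam * relu (x - real (fst l) * \<delta>)"

definition st :: "nat \<Rightarrow> nat list \<Rightarrow> real \<Rightarrow> real \<Rightarrow> nat \<Rightarrow> (nat \<times> real) list \<Rightarrow> real list" where
  "st lam Ns x \<delta> t labels = map (\<lambda>N. hv lam N t) Ns @ map (nodeval lam x \<delta>) labels"

definition lay1 :: "nat \<Rightarrow> nat list \<Rightarrow> uspec list" where
  "lay1 lam Ns = hu lam Ns 1 @ [(0, [(0, rho lam)])]"

definition alayer :: "nat \<Rightarrow> nat list \<Rightarrow> (nat \<times> real) list \<Rightarrow> nat \<Rightarrow> uspec list" where
  "alayer lam Ns labels t = hu lam Ns (Suc t) @
     map (\<lambda>p. (rho lam, [(length Ns + p, -1)])) [0..<length labels]"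

definition clayer :: "nat \<Rightarrow> nat list \<Rightarrow> nat \<Rightarrow> (nat \<times> real \<Rightarrow> (bool \<times> real) list) \<Rightarrow> (nat \<times> real) list \<Rightarrow> nat \<Rightarrow> uspec list" where
  "clayer lam Ns c ch labels t = hu lam Ns (Suc (Suc t)) @
     concat (map (\<lambda>p. map (\<lambda>z. (rho lam, if fst z then [(length Ns + p, -1), (c, -1)] else [(length Ns + p, -1)]))
        (ch (labels ! p))) [0..<length labels])"

definition newlabels :: "nat \<Rightarrow> (nat \<times> real \<Rightarrow> (bool \<times> real) list) \<Rightarrow> (nat \<times> real) list \<Rightarrow> (nat \<times> real) list" where
  "newlabels s ch labels = concat (map (\<lambda>p. map (\<lambda>z. (if fst z then fst (labels ! p) + s else fst (labels ! p), snd z))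
        (ch (labels ! p))) [0..<length labels])"

lemma rho_props: "lam \<ge> 2 \<Longrightarrow> rho lam \<ge> 1/2 \<and> rho lam < 1"
  by (auto simp: rho_def field_simps of_nat_diff)

lemma nodeval_bounds:
  assumes "lam \<ge> 2" "0 \<le> x" "x \<le> 1" "\<delta> \<ge> 0"
  shows "nodeval lam x \<delta> l \<ge> 0" "nodeval lam x \<delta> l \<le> rho lam"
proof -
  have r: "rho lam \<ge> 0" using rho_props[OF assms(1)] by simp
  show "nodeval lam x \<delta> l \<ge> 0" using r by (simp add: nodeval_def relu_nonneg)
  have "real (fst l) * \<delta> \<ge> 0" using assms by simp
  hence "x - real (fst l) * \<delta> \<le> 1" using assms by linarith
  hence "relu (x - real (fst l) * \<delta>) \<le> 1" by (simp add: relu_def)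
  thus "nodeval lam x \<delta> l \<le> rho lam" using r unfolding nodeval_def
    by (metis mult_left_mono mult.right_neutral)
qed

lemma lay1_eval:
  assumes "lam \<ge> 2" "0 \<le> x" "x \<le> 1"
  shows "hstep [x] (lay1 lam Ns) = st lam Ns x \<delta> 1 [(0, 0)]"
proof -
  have "hstep [x] [(0, [(0, rho lam)])] = [relu (rho lam * x)]"
    by (simp add: hstep_def lin_def)
  also have "\<dots> = [nodeval lam x \<delta> (0, 0)]" using rho_props[OF assms(1)] assms
    by (simp add: nodeval_def relu_def)
  finally show ?thesis
    using hstep_hu1[OF assms(1)] by (simp add: lay1_def hstep_append st_def)
qed


lemma relu_shift:
  assumes "r > 0" "c \<ge> 0"
  shows "relu (r * relu z - r * c) = r * relu (z - c)"
proof -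
  have "relu (relu z - c) = relu (z - c)" using assms by (simp add: relu_def)
  moreover have "relu (r * y) = r * relu y" for y
  proof (cases "y \<ge> 0")
    case True thus ?thesis using assms(1) by (simp add: relu_def)
  next
    case False
    hence "r * y < 0" using assms(1) by (simp add: mult_pos_neg)
    thus ?thesis using False by (simp add: relu_def)
  qed
  ultimately show ?thesis by (metis right_diff_distrib)
qed

lemma cmc: "(\<And>p z. p \<in> set ps \<Longrightarrow> z \<in> set (L p) \<Longrightarrow> f p z = g p z) \<Longrightarrow>
  concat (map (\<lambda>p. map (f p) (L p)) ps) = concat (map (\<lambda>p. map (g p) (L p)) ps)"
  by (metis (mono_tags, lifting) map_eq_conv)

definition ueval :: "real list \<Rightarrow> uspec \<Rightarrow> real" where
  "ueval w u = fst u + sum_list (map (\<lambda>e. snd e * w ! fst e) (snd u))"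

lemma hstep_concat: "hstep w (concat (map (\<lambda>p. map (U p) (L p)) ps)) = concat (map (\<lambda>p. map (\<lambda>z. relu (ueval w (U p z))) (L p)) ps)"
  by (simp add: hstep_def lin_def map_concat ueval_def o_def)

lemma nodeval_concat: "map F (concat (map (\<lambda>p. map (U p) (L p)) ps)) = concat (map (\<lambda>p. map (\<lambda>z. F (U p z)) (L p)) ps)"
  by (simp add: map_concat o_def)

lemma nth_st1: "h < length Ns \<Longrightarrow> st lam Ns x \<delta> t labels ! h = hv lam (Ns ! h) t"
  by (simp add: st_def nth_append)
lemma nth_st2: "p < length labels \<Longrightarrow> st lam Ns x \<delta> t labels ! (length Ns + p) = nodeval lam x \<delta> (labels ! p)"
  by (simp add: st_def nth_append)

lemma level_eval:
  assumes lam: "lam \<ge> 2" and x: "0 \<le> x" "x \<le> 1" and d: "\<delta> \<ge> 0" and t: "t \<ge> 1" and c: "c < length Ns"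
    and shift: "\<forall>p<length labels. \<forall>z\<in>set (ch (labels ! p)). fst z \<longrightarrow> hv lam (Ns ! c) (Suc t) = rho lam * real s * \<delta>"
  shows "hstep (hstep (st lam Ns x \<delta> t labels) (alayer lam Ns labels t)) (clayer lam Ns c ch labels t)
       = st lam Ns x \<delta> (Suc (Suc t)) (newlabels s ch labels)"
proof -
  let ?v = "st lam Ns x \<delta> t labels"
  let ?H = "length Ns"
  let ?P = "length labels"
  have rp: "rho lam > 0" using rho_props[OF lam] by simp
  have w1: "hstep ?v (hu lam Ns (Suc t)) = map (\<lambda>N. hv lam N (Suc t)) Ns"
    by (rule hstep_hu[OF t _ lam]) (simp add: nth_st1)
  have w2: "hstep ?v (map (\<lambda>p. (rho lam, [(?H + p, -1)])) [0..<?P])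
      = map (\<lambda>p. rho lam - nodeval lam x \<delta> (labels ! p)) [0..<?P]"
  proof -
    have "hstep ?v (map (\<lambda>p. (rho lam, [(?H + p, -1)])) [0..<?P])
       = map (\<lambda>p. relu (rho lam - ?v ! (?H + p))) [0..<?P]"
      by (simp add: hstep_def lin_def)
    also have "\<dots> = map (\<lambda>p. rho lam - nodeval lam x \<delta> (labels ! p)) [0..<?P]"
      using nodeval_bounds[OF lam x d] by (auto simp: nth_st2 relu_def)
    finally show ?thesis .
  qed
  define w where "w = map (\<lambda>N. hv lam N (Suc t)) Ns @ map (\<lambda>p. rho lam - nodeval lam x \<delta> (labels ! p)) [0..<?P]"
  have hw: "hstep ?v (alayer lam Ns labels t) = w"
    unfolding alayer_def hstep_append w1 w2 w_def ..
  have wh: "\<forall>h<?H. w ! h = hv lam (Ns ! h) (Suc t)" by (simp add: w_def nth_append)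
  have wp: "\<And>p. p < ?P \<Longrightarrow> w ! (?H + p) = rho lam - nodeval lam x \<delta> (labels ! p)"
    by (simp add: w_def nth_append)
  have u1: "hstep w (hu lam Ns (Suc (Suc t))) = map (\<lambda>N. hv lam N (Suc (Suc t))) Ns"
    by (rule hstep_hu[OF _ wh lam]) simp
  have u2: "hstep w (concat (map (\<lambda>p. map (\<lambda>z. (rho lam, if fst z then [(?H + p, -1), (c, -1)] else [(?H + p, -1)]))
        (ch (labels ! p))) [0..<?P]))
     = map (nodeval lam x \<delta>) (newlabels s ch labels)"
    unfolding newlabels_def hstep_concat nodeval_concat
  proof (rule cmc)
    fix p z assume "p \<in> set [0..<?P]" and z: "z \<in> set (ch (labels ! p))"
    hence p: "p < ?P" by simp
    let ?a = "fst (labels ! p)"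
    have y: "nodeval lam x \<delta> (labels ! p) = rho lam * relu (x - real ?a * \<delta>)"
      by (simp add: nodeval_def)
    show "relu (ueval w (rho lam, if fst z then [(?H + p, - 1), (c, - 1)] else [(?H + p, - 1)])) =
        nodeval lam x \<delta> (if fst z then fst (labels ! p) + s else fst (labels ! p), snd z)"
    proof (cases "fst z")
      case True
      have wc: "w ! c = rho lam * (real s * \<delta>)" using wh c shift p z True by auto
      have "rho lam + (- (w ! (?H + p)) + - (w ! c)) = rho lam * relu (x - real ?a * \<delta>) - rho lam * (real s * \<delta>)"
        using wp[OF p] wc y by linarith
      hence "relu (rho lam + (- (w ! (?H + p)) + - (w ! c))) = relu (rho lam * relu (x - real ?a * \<delta>) - rho lam * (real s * \<delta>))"
        by simp
      also have "\<dots> = rho lam * relu (x - real ?a * \<delta> - real s * \<delta>)"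
        by (rule relu_shift[OF rp]) (use d in simp)
      also have "\<dots> = nodeval lam x \<delta> (?a + s, snd z)"
        by (simp add: nodeval_def algebra_simps)
      finally show ?thesis using True by (simp add: ueval_def)
    next
      case False
      have "relu (rho lam + - (w ! (?H + p))) = nodeval lam x \<delta> (labels ! p)"
        using wp[OF p] nodeval_bounds(1)[OF lam x d] by (simp add: relu_def)
      thus ?thesis using False by (simp add: nodeval_def ueval_def)
    qed
  qed
  have e1: "hstep (hstep ?v (alayer lam Ns labels t)) (clayer lam Ns c ch labels t) = hstep w (clayer lam Ns c ch labels t)"
    by (simp only: hw)
  have e2: "hstep w (clayer lam Ns c ch labels t) = map (\<lambda>N. hv lam N (Suc (Suc t))) Ns @ map (nodeval lam x \<delta>) (newlabels s ch labels)"
    unfolding clayer_def hstep_append u1 u2 ..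
  show ?thesis unfolding e1 e2 st_def[of lam Ns x \<delta> "Suc (Suc t)"] ..
qed


type_synonym desc = "nat \<times> nat \<times> (nat \<times> real \<Rightarrow> (bool \<times> real) list)"

fun build :: "nat \<Rightarrow> nat list \<Rightarrow> nat \<Rightarrow> (nat \<times> real) list \<Rightarrow> desc list \<Rightarrow> uspec list list" where
  "build lam Ns t labels [] = []"
| "build lam Ns t labels ((c, s, ch) # ds) =
     alayer lam Ns labels t # clayer lam Ns c ch labels t # build lam Ns (Suc (Suc t)) (newlabels s ch labels) ds"

fun flabels :: "(nat \<times> real) list \<Rightarrow> desc list \<Rightarrow> (nat \<times> real) list" where
  "flabels labels [] = labels"
| "flabels labels ((c, s, ch) # ds) = flabels (newlabels s ch labels) ds"

definition descok :: "nat \<Rightarrow> nat list \<Rightarrow> real \<Rightarrow> nat \<Rightarrow> desc \<Rightarrow> bool" where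
  "descok lam Ns \<delta> t d = (case d of (c, s, ch) \<Rightarrow> c < length Ns \<and>
      (\<forall>l. \<forall>z\<in>set (ch l). fst z \<longrightarrow> hv lam (Ns ! c) (Suc t) = rho lam * real s * \<delta>))"

lemma build_eval:
  assumes lam: "lam \<ge> 2" and x: "0 \<le> x" "x \<le> 1" and d: "\<delta> \<ge> 0" and t: "t \<ge> 1"
    and ok: "\<forall>i<length ds. descok lam Ns \<delta> (t + 2 * i) (ds ! i)"
  shows "hev (st lam Ns x \<delta> t labels) (build lam Ns t labels ds) = st lam Ns x \<delta> (t + 2 * length ds) (flabels labels ds)"
  using t ok
proof (induction ds arbitrary: t labels)
  case Nil thus ?case by (simp add: hev_def)
next
  case (Cons dd ds)
  obtain c s ch where dd: "dd = (c, s, ch)" by (cases dd) auto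
  have ok0: "descok lam Ns \<delta> t dd" using Cons.prems(2) by (metis add.right_neutral length_greater_0_conv list.distinct(1) mult_0_right nth_Cons_0)
  hence c: "c < length Ns" and sh: "\<forall>l. \<forall>z\<in>set (ch l). fst z \<longrightarrow> hv lam (Ns ! c) (Suc t) = rho lam * real s * \<delta>"
    using dd by (auto simp: descok_def)
  have lev: "hstep (hstep (st lam Ns x \<delta> t labels) (alayer lam Ns labels t)) (clayer lam Ns c ch labels t)
       = st lam Ns x \<delta> (Suc (Suc t)) (newlabels s ch labels)"
    using level_eval[OF lam x d Cons.prems(1) c, of labels ch s] sh by blast
  have ok': "\<forall>i<length ds. descok lam Ns \<delta> (Suc (Suc t) + 2 * i) (ds ! i)"
  proof (intro allI impI)
    fix i assume "i < length ds"
    hence "Suc i < length (dd # ds)" by simp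
    hence "descok lam Ns \<delta> (t + 2 * Suc i) ((dd # ds) ! Suc i)" using Cons.prems(2) by blast
    thus "descok lam Ns \<delta> (Suc (Suc t) + 2 * i) (ds ! i)" by simp
  qed
  have "hev (st lam Ns x \<delta> t labels) (build lam Ns t labels (dd # ds))
      = hev (st lam Ns x \<delta> (Suc (Suc t)) (newlabels s ch labels)) (build lam Ns (Suc (Suc t)) (newlabels s ch labels) ds)"
    using lev by (simp add: dd hev_Cons)
  also have "\<dots> = st lam Ns x \<delta> (Suc (Suc t) + 2 * length ds) (flabels (newlabels s ch labels) ds)"
    by (rule Cons.IH) (use Cons.prems ok' in auto)
  finally show ?case by (simp add: dd)
qed

lemma build_append:
  "build lam Ns t labels (ds1 @ ds2) = build lam Ns t labels ds1 @ build lam Ns (t + 2 * length ds1) (flabels labels ds1) ds2"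
  by (induction lam Ns t labels ds1 rule: build.induct) auto

lemma flabels_append: "flabels labels (ds1 @ ds2) = flabels (flabels labels ds1) ds2"
  by (induction labels ds1 rule: flabels.induct) auto

lemma length_build: "length (build lam Ns t labels ds) = 2 * length ds"
  by (induction lam Ns t labels ds rule: build.induct) auto

lemma length_hu[simp]: "length (hu lam Ns t) = length Ns" by (simp add: hu_def)

lemma length_newlabels: "length (newlabels s ch labels) = sum_list (map (\<lambda>p. length (ch (labels ! p))) [0..<length labels])"
  by (simp add: newlabels_def length_concat o_def)

lemma length_clayer: "length (clayer lam Ns c ch labels t) = length Ns + length (newlabels s ch labels)"
  by (simp add: clayer_def length_newlabels length_concat o_def)

lemma length_alayer: "length (alayer lam Ns labels t) = length Ns + length labels"
  by (simp add: alayer_def)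

lemma wfn_append: "wfn d (A @ B) = (wfn d A \<and> wfn (if A = [] then d else length (last A)) B)"
  by (induction d A rule: wfn.induct) auto


lemma wfn_build:
  assumes "\<forall>i<length ds. fst (ds ! i) < length Ns"
    and "wfn (length Ns + length (flabels labels ds)) rest"
  shows "wfn (length Ns + length labels) (build lam Ns t labels ds @ rest)"
  using assms
proof (induction lam Ns t labels ds rule: build.induct)
  case (1 lam Ns t labels) thus ?case by simp
next
  case (2 lam Ns t labels c s ch ds)
  have c: "c < length Ns" using "2.prems"(1) by (metis fst_conv length_greater_0_conv list.discI nth_Cons_0)
  have r: "\<forall>i<length ds. fst (ds ! i) < length Ns" using "2.prems"(1) by auto
  have a: "\<forall>u\<in>set (alayer lam Ns labels t). \<forall>e\<in>set (snd u). fst e < length Ns + length labels"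
    by (auto simp: alayer_def hu_def split: if_splits)
  have b: "\<forall>u\<in>set (clayer lam Ns c ch labels t). \<forall>e\<in>set (snd u). fst e < length (alayer lam Ns labels t)"
    using c by (auto simp: clayer_def hu_def length_alayer split: if_splits)
  have IH: "wfn (length Ns + length (newlabels s ch labels)) (build lam Ns (Suc (Suc t)) (newlabels s ch labels) ds @ rest)"
    using 2 r by simp
  show ?case using a b IH by (simp add: length_clayer[of lam Ns c ch labels t s])
qed

lemma lcost_append: "lcost (A @ B) = lcost A + lcost B" by (simp add: lcost_def)

lemma lcost_le: "(\<forall>u\<in>set us. ucost u \<le> k) \<Longrightarrow> lcost us \<le> k * length us"
  by (induction us) (auto simp: lcost_def)

lemma lcost_alayer: "lcost (alayer lam Ns labels t) \<le> 2 * (length Ns + length labels)"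
proof -
  have "\<forall>u\<in>set (alayer lam Ns labels t). ucost u \<le> 2" by (auto simp: alayer_def hu_def ucost_def)
  thus ?thesis using lcost_le[of "alayer lam Ns labels t" 2] by (simp add: length_alayer)
qed

lemma lcost_clayer: "lcost (clayer lam Ns c ch labels t) \<le> 3 * (length Ns + length (newlabels s ch labels))"
proof -
  have "\<forall>u\<in>set (clayer lam Ns c ch labels t). ucost u \<le> 3" by (auto simp: clayer_def hu_def ucost_def)
  thus ?thesis using lcost_le[of "clayer lam Ns c ch labels t" 3] by (simp add: length_clayer[of lam Ns c ch labels t s])
qed

fun bcost :: "nat \<Rightarrow> (nat \<times> real) list \<Rightarrow> desc list \<Rightarrow> nat" where
  "bcost H labels [] = 0"
| "bcost H labels ((c, s, ch) # ds) = 5 * H + 2 * length labels + 3 * length (newlabels s ch labels) + bcost H (newlabels s ch labels) ds"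

lemma cost_build: "sum_list (map lcost (build lam Ns t labels ds)) \<le> bcost (length Ns) labels ds"
proof (induction lam Ns t labels ds rule: build.induct)
  case (1 lam Ns t labels) thus ?case by simp
next
  case (2 lam Ns t labels c s ch ds)
  thus ?case using lcost_alayer[of lam Ns labels t] lcost_clayer[of lam Ns c ch labels t s] by simp
qed

lemma bcost_append: "bcost H labels (ds1 @ ds2) = bcost H labels ds1 + bcost H (flabels labels ds1) ds2"
  by (induction H labels ds1 rule: bcost.induct) auto


lemma F11_props:
  assumes "f \<in> F11"
  shows "\<forall>x\<in>{0..1}. \<forall>y\<in>{0..1}. \<bar>f x - f y\<bar> \<le> \<bar>x - y\<bar>" and "\<bar>f 0\<bar> \<le> 1"
proof -
  obtain g where gi: "g integrable_on {0..1}" and gx: "\<forall>x\<in>{0..1}. (g has_integral (f x - f 0)) {0..x}"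
    and gae: "AE x in lebesgue. x \<in> {0..1} \<longrightarrow> \<bar>g x\<bar> \<le> 1"
    and fae: "AE x in lebesgue. x \<in> {0..1} \<longrightarrow> \<bar>f x\<bar> \<le> 1"
    using assms unfolding F11_def by blast
  obtain N where N: "{x \<in> space lebesgue. \<not> (x \<in> {0..1} \<longrightarrow> \<bar>g x\<bar> \<le> 1)} \<subseteq> N"
    "emeasure lebesgue N = 0" "N \<in> sets lebesgue"
    using gae by (rule AE_E)
  have negN: "negligible N" using N by (simp add: negligible_iff_null_sets null_sets_def)
  have ord: "\<bar>f x - f y\<bar> \<le> x - y" if xy: "0 \<le> y" "y \<le> x" "x \<le> 1" for x y
  proof -
    have gyx: "g integrable_on {y..x}" by (rule integrable_on_subinterval[OF gi]) (use xy in auto)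
    then obtain I where I: "(g has_integral I) {y..x}" by blast
    have "(g has_integral (f y - f 0 + I)) {0..x}"
      by (rule has_integral_combine[of 0 y x]) (use xy gx I in auto)
    moreover have "(g has_integral (f x - f 0)) {0..x}" using gx xy by auto
    ultimately have "f y - f 0 + I = f x - f 0" using has_integral_unique by blast
    hence "I = f x - f y" by simp
    hence I': "(g has_integral (f x - f y)) {y..x}" using I by simp
    let ?g = "\<lambda>t. if t \<in> N then 0 else g t"
    have "(?g has_integral (f x - f y)) {y..x}"
      by (rule has_integral_spike[OF negN _ I']) auto
    moreover have "\<And>t. t \<in> {y..x} - {} \<Longrightarrow> norm (?g t) \<le> 1"
    proof -
      fix t assume t: "t \<in> {y..x} - {}"
      show "norm (?g t) \<le> 1"
      proof (cases "t \<in> N")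
        case False
        hence "t \<in> {0..1} \<longrightarrow> \<bar>g t\<bar> \<le> 1" using N(1) by auto
        thus ?thesis using t xy False by auto
      qed simp
    qed
    ultimately have "norm (f x - f y) \<le> 1 * Henstock_Kurzweil_Integration.content {y..x}"
      by (intro has_integral_bound_real[where S="{}"]) auto
    thus ?thesis using xy by (simp add: content_real)
  qed
  show "\<forall>x\<in>{0..1}. \<forall>y\<in>{0..1}. \<bar>f x - f y\<bar> \<le> \<bar>x - y\<bar>"
  proof (intro ballI)
    fix x y :: real assume "x \<in> {0..1}" "y \<in> {0..1}"
    thus "\<bar>f x - f y\<bar> \<le> \<bar>x - y\<bar>"
      using ord[of y x] ord[of x y] by (cases "y \<le> x") (auto simp: abs_minus_commute)
  qed
  show "\<bar>f 0\<bar> \<le> 1"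
  proof (rule ccontr)
    assume c: "\<not> \<bar>f 0\<bar> \<le> 1"
    obtain N2 where N2: "{x \<in> space lebesgue. \<not> (x \<in> {0..1} \<longrightarrow> \<bar>f x\<bar> \<le> 1)} \<subseteq> N2"
      "emeasure lebesgue N2 = 0" "N2 \<in> sets lebesgue"
      using fae by (rule AE_E)
    have negN2: "negligible N2" using N2 by (simp add: negligible_iff_null_sets null_sets_def)
    define \<eta> where "\<eta> = min 1 ((\<bar>f 0\<bar> - 1) / 2)"
    have eta: "\<eta> > 0" "\<eta> \<le> 1" using c by (auto simp: \<eta>_def)
    have "{0..\<eta>} \<subseteq> N2"
    proof
      fix x assume x: "x \<in> {0..\<eta>}"
      have "\<bar>f x - f 0\<bar> \<le> x - 0" using ord[of 0 x] x eta by auto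
      moreover have "2 * x \<le> \<bar>f 0\<bar> - 1" using x by (auto simp: \<eta>_def)
      moreover have "\<bar>f 0\<bar> - \<bar>f x\<bar> \<le> \<bar>f x - f 0\<bar>"
        using abs_triangle_ineq2[of "f 0" "f x"] by (simp add: abs_minus_commute)
      ultimately have "\<bar>f x\<bar> > 1" using c x by simp
      thus "x \<in> N2" using N2(1) x eta by auto
    qed
    hence "negligible {0..\<eta>}" using negN2 negligible_subset by blast
    moreover have "box 0 \<eta> \<noteq> {}" using eta by (auto simp: box_real)
    ultimately show False using negligible_interval(1)[of 0 \<eta>] by (metis cbox_interval)
  qed
qed


fun Gs :: "(real \<Rightarrow> real) \<Rightarrow> real \<Rightarrow> real \<Rightarrow> real \<Rightarrow> nat \<Rightarrow> real" where
  "Gs F c0 \<sigma> \<delta> 0 = c0"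
| "Gs F c0 \<sigma> \<delta> (Suc i) = Gs F c0 \<sigma> \<delta> i + (if Gs F c0 \<sigma> \<delta> i \<le> F (real i * \<delta>) then \<sigma> * \<delta> else - (\<sigma> * \<delta>))"

definition sg :: "(real \<Rightarrow> real) \<Rightarrow> real \<Rightarrow> real \<Rightarrow> real \<Rightarrow> nat \<Rightarrow> int" where
  "sg F c0 \<sigma> \<delta> i = (if Gs F c0 \<sigma> \<delta> i \<le> F (real i * \<delta>) then 1 else -1)"

definition Mm :: "(real \<Rightarrow> real) \<Rightarrow> real \<Rightarrow> real \<Rightarrow> real \<Rightarrow> nat \<Rightarrow> int" where
  "Mm F c0 \<sigma> \<delta> a = (if a = 0 then 2 * sg F c0 \<sigma> \<delta> 0 else 2 * (sg F c0 \<sigma> \<delta> a - sg F c0 \<sigma> \<delta> (a - 1)))"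

lemma Mm_bound: "\<bar>Mm F c0 \<sigma> \<delta> a\<bar> \<le> 4"
  by (auto simp: Mm_def sg_def)

lemma Gs_Suc': "Gs F c0 \<sigma> \<delta> (Suc i) = Gs F c0 \<sigma> \<delta> i + real_of_int (sg F c0 \<sigma> \<delta> i) * \<sigma> * \<delta>"
  by (simp add: sg_def)

lemma track:
  assumes lip: "\<And>s t. 0 \<le> s \<Longrightarrow> 0 \<le> t \<Longrightarrow> \<bar>F s - F t\<bar> \<le> \<bar>s - t\<bar>"
    and d: "\<delta> > 0" and s: "\<sigma> \<ge> 1" and c0: "\<bar>c0 - F 0\<bar> \<le> \<delta>"
  shows "\<bar>Gs F c0 \<sigma> \<delta> i - F (real i * \<delta>)\<bar> \<le> (\<sigma> + 1) * \<delta>"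
proof (induction i)
  case 0
  have "\<delta> \<le> (\<sigma> + 1) * \<delta>" using s d by (simp add: algebra_simps)
  thus ?case using c0 by simp
next
  case (Suc i)
  have l: "\<bar>F (real (Suc i) * \<delta>) - F (real i * \<delta>)\<bar> \<le> \<delta>"
    using lip[of "real (Suc i) * \<delta>" "real i * \<delta>"] d by (simp add: algebra_simps)
  have sd: "\<sigma> * \<delta> \<ge> \<delta>" using s d by simp
  show ?case
  proof (cases "Gs F c0 \<sigma> \<delta> i \<le> F (real i * \<delta>)")
    case True
    thus ?thesis using Suc.IH l sd by (simp add: algebra_simps abs_le_iff)
  next
    case False
    thus ?thesis using Suc.IH l sd by (simp add: algebra_simps abs_le_iff)
  qed
qed

definition appr :: "(real \<Rightarrow> real) \<Rightarrow> real \<Rightarrow> real \<Rightarrow> real \<Rightarrow> nat \<Rightarrow> real \<Rightarrow> real" where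
  "appr F c0 \<sigma> \<delta> n x = c0 + (\<Sum>a<n. \<sigma> / 2 * real_of_int (Mm F c0 \<sigma> \<delta> a) * relu (x - real a * \<delta>))"

lemma partial:
  assumes d: "\<delta> > 0" and x: "real i * \<delta> \<le> x" "0 \<le> x"
  shows "c0 + (\<Sum>a<Suc i. \<sigma> / 2 * real_of_int (Mm F c0 \<sigma> \<delta> a) * relu (x - real a * \<delta>))
       = Gs F c0 \<sigma> \<delta> i + real_of_int (sg F c0 \<sigma> \<delta> i) * \<sigma> * (x - real i * \<delta>)"
  using x
proof (induction i)
  case 0 thus ?case by (simp add: Mm_def relu_def)
next
  case (Suc i)
  have x1: "real i * \<delta> \<le> x" using Suc.prems d
    by (smt (verit, best) mult_right_mono of_nat_0_le_iff of_nat_Suc)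
  have r: "relu (x - real (Suc i) * \<delta>) = x - real (Suc i) * \<delta>" using Suc.prems by (simp add: relu_def)
  have m: "real_of_int (Mm F c0 \<sigma> \<delta> (Suc i)) = 2 * (real_of_int (sg F c0 \<sigma> \<delta> (Suc i)) - real_of_int (sg F c0 \<sigma> \<delta> i))"
    by (simp add: Mm_def)
  have "c0 + (\<Sum>a<Suc (Suc i). \<sigma> / 2 * real_of_int (Mm F c0 \<sigma> \<delta> a) * relu (x - real a * \<delta>))
     = (c0 + (\<Sum>a<Suc i. \<sigma> / 2 * real_of_int (Mm F c0 \<sigma> \<delta> a) * relu (x - real a * \<delta>)))
       + \<sigma> / 2 * real_of_int (Mm F c0 \<sigma> \<delta> (Suc i)) * relu (x - real (Suc i) * \<delta>)"
    by (simp only: sum.lessThan_Suc add.assoc)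
  also have "\<dots> = Gs F c0 \<sigma> \<delta> i + real_of_int (sg F c0 \<sigma> \<delta> i) * \<sigma> * (x - real i * \<delta>)
       + \<sigma> / 2 * (2 * (real_of_int (sg F c0 \<sigma> \<delta> (Suc i)) - real_of_int (sg F c0 \<sigma> \<delta> i))) * (x - real (Suc i) * \<delta>)"
    by (simp only: Suc.IH[OF x1 Suc.prems(2)] m r)
  also have "\<dots> = Gs F c0 \<sigma> \<delta> (Suc i) + real_of_int (sg F c0 \<sigma> \<delta> (Suc i)) * \<sigma> * (x - real (Suc i) * \<delta>)"
    unfolding Gs_Suc' by (simp add: algebra_simps)
  finally show ?case .
qed

lemma appr_piece:
  assumes d: "\<delta> > 0" and i: "i < n" and x: "real i * \<delta> \<le> x" "x \<le> real (Suc i) * \<delta>" "0 \<le> x"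
  shows "appr F c0 \<sigma> \<delta> n x = Gs F c0 \<sigma> \<delta> i + real_of_int (sg F c0 \<sigma> \<delta> i) * \<sigma> * (x - real i * \<delta>)"
proof -
  have un: "{..<n} = {..<Suc i} \<union> {Suc i..<n}" using i by auto
  have "(\<Sum>a<n. \<sigma> / 2 * real_of_int (Mm F c0 \<sigma> \<delta> a) * relu (x - real a * \<delta>))
      = (\<Sum>a<Suc i. \<sigma> / 2 * real_of_int (Mm F c0 \<sigma> \<delta> a) * relu (x - real a * \<delta>))
      + (\<Sum>a\<in>{Suc i..<n}. \<sigma> / 2 * real_of_int (Mm F c0 \<sigma> \<delta> a) * relu (x - real a * \<delta>))"
    by (subst un, rule sum.union_disjoint) auto
  moreover have "(\<Sum>a\<in>{Suc i..<n}. \<sigma> / 2 * real_of_int (Mm F c0 \<sigma> \<delta> a) * relu (x - real a * \<delta>)) = 0"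
  proof (rule sum.neutral, rule ballI)
    fix a assume "a \<in> {Suc i..<n}"
    hence "real (Suc i) * \<delta> \<le> real a * \<delta>" using d by (intro mult_right_mono) auto
    hence "relu (x - real a * \<delta>) = 0" using x by (simp add: relu_def)
    thus "\<sigma> / 2 * real_of_int (Mm F c0 \<sigma> \<delta> a) * relu (x - real a * \<delta>) = 0" by simp
  qed
  ultimately show ?thesis unfolding appr_def using partial[OF d x(1) x(3)] by simp
qed

lemma appr_error:
  assumes lip: "\<And>s t. 0 \<le> s \<Longrightarrow> 0 \<le> t \<Longrightarrow> \<bar>F s - F t\<bar> \<le> \<bar>s - t\<bar>"
    and d: "\<delta> > 0" and s: "\<sigma> \<ge> 1" and c0: "\<bar>c0 - F 0\<bar> \<le> \<delta>"
    and n: "n \<ge> 1" and x: "0 \<le> x" "x \<le> real n * \<delta>"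
  shows "\<bar>appr F c0 \<sigma> \<delta> n x - F x\<bar> \<le> (2 * \<sigma> + 2) * \<delta>"
proof -
  define k where "k = nat \<lfloor>x / \<delta>\<rfloor>"
  have k1: "real k \<le> x / \<delta>" using x d by (simp add: k_def)
  have k2: "x / \<delta> < real k + 1" using x d by (simp add: k_def)
  have kx: "real k * \<delta> \<le> x" using k1 d by (simp add: field_simps)
  have xk: "x < (real k + 1) * \<delta>" using k2 d by (simp add: field_simps)
  obtain i where i: "i < n" "real i * \<delta> \<le> x" "x \<le> real (Suc i) * \<delta>"
  proof (cases "k < n")
    case True thus ?thesis using that[of k] kx xk by (simp add: add.commute)
  next
    case False
    hence "real n * \<delta> \<le> real k * \<delta>" using d by (intro mult_right_mono) auto
    hence xe: "x = real n * \<delta>" using kx x by simp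
    have "real (n - 1) * \<delta> \<le> real n * \<delta>" using d n by (intro mult_right_mono) auto
    hence "real (n - 1) * \<delta> \<le> x" using xe by simp
    moreover have "x \<le> real (Suc (n - 1)) * \<delta>" using xe n by simp
    ultimately show ?thesis using that[of "n - 1"] n by simp
  qed
  have ap: "appr F c0 \<sigma> \<delta> n x = Gs F c0 \<sigma> \<delta> i + real_of_int (sg F c0 \<sigma> \<delta> i) * \<sigma> * (x - real i * \<delta>)"
    by (rule appr_piece[OF d i x(1)])
  have t: "\<bar>Gs F c0 \<sigma> \<delta> i - F (real i * \<delta>)\<bar> \<le> (\<sigma> + 1) * \<delta>"
    by (rule track[OF lip d s c0])
  have h: "0 \<le> x - real i * \<delta>" "x - real i * \<delta> \<le> \<delta>" using i by (auto simp: algebra_simps)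
  have sgb: "\<bar>real_of_int (sg F c0 \<sigma> \<delta> i) * \<sigma> * (x - real i * \<delta>)\<bar> \<le> \<sigma> * \<delta>"
  proof -
    have "\<bar>real_of_int (sg F c0 \<sigma> \<delta> i)\<bar> = 1" by (simp add: sg_def)
    hence "\<bar>real_of_int (sg F c0 \<sigma> \<delta> i) * \<sigma> * (x - real i * \<delta>)\<bar> = \<sigma> * (x - real i * \<delta>)"
      using s h by (simp add: abs_mult)
    also have "\<dots> \<le> \<sigma> * \<delta>" using h s by (intro mult_left_mono) auto
    finally show ?thesis .
  qed
  have l: "\<bar>F (real i * \<delta>) - F x\<bar> \<le> \<delta>"
    using lip[of "real i * \<delta>" x] h x d by simp
  show ?thesis unfolding ap using t sgb l by (simp add: algebra_simps abs_le_iff)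
qed


definition qq :: "nat \<Rightarrow> nat \<Rightarrow> nat" where "qq lam L = lam ^ L div 2 ^ L"
definition dlt :: "nat \<Rightarrow> nat \<Rightarrow> real" where "dlt lam L = real (qq lam L) / real (lam ^ L)"
definition Nsplit :: "nat \<Rightarrow> nat \<Rightarrow> nat \<Rightarrow> nat" where
  "Nsplit lam L j = (lam - 1) * 2 ^ j * qq lam L * lam ^ (L + 1 + 2 * j)"
definition Nlist :: "nat \<Rightarrow> nat \<Rightarrow> nat \<Rightarrow> nat list" where
  "Nlist lam L Nc = map (Nsplit lam L) [0..<Suc L] @ [Nc, Nc]"
definition wsl :: "nat \<Rightarrow> int \<Rightarrow> real list" where
  "wsl lam m = (if m \<ge> 0 then concat (replicate (nat m) [1 / real lam, rho lam]) else replicate (nat (- m)) (-1))"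
definition chC :: "nat \<times> real \<Rightarrow> (bool \<times> real) list" where "chC = (\<lambda>l. [(False, 0)])"
definition chS :: "nat \<times> real \<Rightarrow> (bool \<times> real) list" where "chS = (\<lambda>l. [(False, 0), (True, 0)])"
definition chF :: "nat \<Rightarrow> (nat \<Rightarrow> int) \<Rightarrow> nat \<times> real \<Rightarrow> (bool \<times> real) list" where
  "chF lam M = (\<lambda>l. map (\<lambda>w. (False, w)) (wsl lam (M (fst l))))"
definition dsl :: "nat \<Rightarrow> nat \<Rightarrow> (nat \<Rightarrow> int) \<Rightarrow> desc list" where
  "dsl lam L M = replicate L (0, 0, chC) @ map (\<lambda>j. (j, 2 ^ j, chS)) [0..<Suc L] @ [(0, 0, chF lam M)]"
definition cedges :: "nat \<Rightarrow> nat \<Rightarrow> bool \<Rightarrow> (nat \<times> real) list" where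
  "cedges lam L pos = (if pos then [(Suc L, 1 / real lam), (Suc (Suc L), rho lam)] else [(Suc L, -1)])"
definition outl :: "nat \<Rightarrow> nat \<Rightarrow> bool \<Rightarrow> (nat \<Rightarrow> int) \<Rightarrow> uspec list" where
  "outl lam L pos M = (let fl = flabels [(0, 0)] (dsl lam L M) in
     [(0, map (\<lambda>p. (L + 3 + p, snd (fl ! p))) [0..<length fl] @ cedges lam L pos)])"
definition netl :: "nat \<Rightarrow> nat \<Rightarrow> nat \<Rightarrow> bool \<Rightarrow> (nat \<Rightarrow> int) \<Rightarrow> uspec list list" where
  "netl lam L Nc pos M = (lay1 lam (Nlist lam L Nc) # build lam (Nlist lam L Nc) 1 [(0, 0)] (dsl lam L M)) @ [outl lam L pos M]"

lemma length_Nlist[simp]: "length (Nlist lam L Nc) = L + 3" by (simp add: Nlist_def)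
lemma length_dsl: "length (dsl lam L M) = 2 * L + 2" by (simp add: dsl_def)

lemma Nlist_split: "j \<le> L \<Longrightarrow> Nlist lam L Nc ! j = Nsplit lam L j"
  by (simp add: Nlist_def nth_append)
lemma Nlist_c1: "Nlist lam L Nc ! Suc L = Nc" by (simp add: Nlist_def nth_append)
lemma Nlist_c2: "Nlist lam L Nc ! Suc (Suc L) = Nc" by (simp add: Nlist_def nth_append)

lemma qq_le: "2 ^ L * qq lam L \<le> lam ^ L"
  unfolding qq_def by (metis div_times_less_eq_dividend mult.commute)

lemma hv_small: "N < lam ^ T \<Longrightarrow> hv lam N T = real N / real (lam ^ T)"
  by (simp add: hv_def)

lemma hv_split:
  assumes lam: "lam \<ge> 2" and j: "j \<le> L"
  shows "hv lam (Nsplit lam L j) (Suc (1 + 2 * (L + j))) = rho lam * real (2 ^ j) * dlt lam L"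
proof -
  let ?A = "lam ^ (L + 1 + 2 * j)"
  have T: "lam ^ (Suc (1 + 2 * (L + j))) = ?A * lam ^ (L + 1)"
    by (simp add: power_add[symmetric] algebra_simps)
  have "2 ^ j * qq lam L \<le> 2 ^ L * qq lam L" using j by (intro mult_right_mono) (auto intro: power_increasing)
  hence b: "2 ^ j * qq lam L \<le> lam ^ L" using qq_le[of L lam] by linarith
  have "(lam - 1) * (2 ^ j * qq lam L) \<le> (lam - 1) * lam ^ L" using b by (rule mult_left_mono) simp
  also have "\<dots> < lam * lam ^ L" using lam by simp
  finally have c: "(lam - 1) * 2 ^ j * qq lam L < lam ^ (L + 1)" by (simp add: mult.assoc)
  have Apos: "?A > 0" using lam by simp
  have "Nsplit lam L j < lam ^ (Suc (1 + 2 * (L + j)))"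
    unfolding T Nsplit_def using c Apos by (simp add: mult.commute)
  hence "hv lam (Nsplit lam L j) (Suc (1 + 2 * (L + j))) = real (Nsplit lam L j) / real (?A * lam ^ (L + 1))"
    using hv_small T by metis
  also have "\<dots> = real ((lam - 1) * 2 ^ j * qq lam L) / real (lam ^ (L + 1))"
    using Apos by (simp add: Nsplit_def)
  also have "\<dots> = rho lam * real (2 ^ j) * dlt lam L"
    using lam by (simp add: rho_def dlt_def of_nat_diff field_simps)
  finally show ?thesis .
qed

lemma dsl_ok:
  assumes lam: "lam \<ge> 2"
  shows "\<forall>i<length (dsl lam L M). descok lam (Nlist lam L Nc) (dlt lam L) (1 + 2 * i) (dsl lam L M ! i)"
proof (intro allI impI)
  fix i assume i: "i < length (dsl lam L M)"
  show "descok lam (Nlist lam L Nc) (dlt lam L) (1 + 2 * i) (dsl lam L M ! i)"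
  proof (cases "i < L")
    case True
    hence "dsl lam L M ! i = (0, 0, chC)" by (simp add: dsl_def nth_append)
    thus ?thesis by (simp add: descok_def chC_def)
  next
    case False
    show ?thesis
    proof (cases "i < L + Suc L")
      case True
      define j where "j = i - L"
      have j: "j \<le> L" "i = L + j" using True False by (auto simp: j_def)
      hence "dsl lam L M ! i = (j, 2 ^ j, chS)" by (simp add: dsl_def nth_append)
      moreover have "hv lam (Nlist lam L Nc ! j) (Suc (1 + 2 * i)) = rho lam * real (2 ^ j) * dlt lam L"
        using hv_split[OF lam j(1)] j by (simp add: Nlist_split)
      ultimately show ?thesis using j by (simp add: descok_def chS_def)
    next
      case False2: False
      hence "i = L + Suc L" using i by (simp add: length_dsl)
      hence "dsl lam L M ! i = (0, 0, chF lam M)" by (simp add: dsl_def nth_append)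
      thus ?thesis by (simp add: descok_def chF_def)
    qed
  qed
qed


lemma newlabels_chC: "newlabels s chC [(0, 0)] = [(0, 0)]"
  by (simp add: newlabels_def chC_def)

lemma flabels_copy: "flabels [(0, 0)] (replicate k (0, 0, chC)) = [(0, 0)]"
  by (induction k) (simp_all add: newlabels_chC)

lemma newlabels_chS: "newlabels s chS labels = concat (map (\<lambda>l. [(fst l, 0), (fst l + s, 0)]) labels)"
proof -
  have "newlabels s chS labels = concat (map (\<lambda>p. [(fst (labels ! p), 0), (fst (labels ! p) + s, 0)]) [0..<length labels])"
    by (simp add: newlabels_def chS_def)
  also have "\<dots> = concat (map ((\<lambda>l. [(fst l, 0), (fst l + s, 0)]) \<circ> (\<lambda>p. labels ! p)) [0..<length labels])"
    by (simp add: o_def)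
  also have "\<dots> = concat (map (\<lambda>l. [(fst l, 0), (fst l + s, 0)]) labels)"
    by (metis map_map map_nth)
  finally show ?thesis .
qed

lemma sl_concat: "sum_list (concat xss) = sum_list (map sum_list (xss :: real list list))"
  by (induction xss) auto

lemma mset_pairs: "mset (concat (map (\<lambda>a. [a, a + s]) xs)) = mset xs + mset (map (\<lambda>a. a + s) xs)"
  by (induction xs) (auto simp: add_ac)

definition SL :: "nat \<Rightarrow> (nat \<times> real) list" where
  "SL k = flabels [(0, 0)] (map (\<lambda>j. (j, 2 ^ j, chS)) [0..<k])"

lemma SL_Suc: "SL (Suc k) = newlabels (2 ^ k) chS (SL k)"
  by (simp add: SL_def flabels_append)

lemma SL_props: "mset (map fst (SL k)) = mset [0..<2 ^ k] \<and> length (SL k) = 2 ^ k"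
proof (induction k)
  case 0 thus ?case by (simp add: SL_def)
next
  case (Suc k)
  have m: "map fst (SL (Suc k)) = concat (map (\<lambda>a. [a, a + 2 ^ k]) (map fst (SL k)))"
    unfolding SL_Suc newlabels_chS by (simp add: map_concat o_def)
  have "mset (map fst (SL (Suc k))) = mset (map fst (SL k)) + mset (map (\<lambda>a. a + 2 ^ k) (map fst (SL k)))"
    unfolding m mset_pairs ..
  also have "\<dots> = mset [0..<2 ^ k] + image_mset (\<lambda>a. a + 2 ^ k) (mset [0..<2 ^ k])"
    using Suc.IH mset_map[of "\<lambda>a. a + 2 ^ k" "map fst (SL k)"] by simp
  also have "\<dots> = mset ([0..<2 ^ k] @ map (\<lambda>a. a + 2 ^ k) [0..<2 ^ k])" by (simp add: mset_map)
  also have "[0..<2 ^ k] @ map (\<lambda>a. a + 2 ^ k) [0..<2 ^ k] = [0..<2 ^ Suc k]"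
  proof -
    have "map (\<lambda>a. a + 2 ^ k) [0..<2 ^ k] = [2 ^ k..<2 ^ k + 2 ^ k]"
      by (metis add.commute add_0 map_add_upt)
    thus ?thesis by (simp add: upt_add_eq_append[symmetric] mult_2)
  qed
  finally have "mset (map fst (SL (Suc k))) = mset [0..<2 ^ Suc k]" .
  moreover have "length (SL (Suc k)) = 2 ^ Suc k"
    unfolding SL_Suc newlabels_chS using Suc.IH by (simp add: length_concat o_def sum_list_triv)
  ultimately show ?case by simp
qed

lemma fl_eq: "flabels [(0, 0)] (dsl lam L M) = newlabels 0 (chF lam M) (SL (Suc L))"
  by (simp add: dsl_def flabels_append flabels_copy SL_def)

lemma sum_concat_rep: "sum_list (concat (replicate k xs)) = real k * sum_list (xs :: real list)"
  by (induction k) (auto simp: algebra_simps)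

lemma wsl_sum: "lam \<ge> 2 \<Longrightarrow> sum_list (wsl lam m) = real_of_int m"
  by (auto simp: wsl_def sum_concat_rep sum_list_replicate rho_def of_nat_diff field_simps)

lemma wsl_len: "\<bar>m\<bar> \<le> 4 \<Longrightarrow> length (wsl lam m) \<le> 8"
  by (auto simp: wsl_def length_concat sum_list_triv o_def sum_list_replicate)

lemma wsl_in: "lam \<ge> 2 \<Longrightarrow> w \<in> set (wsl lam m) \<Longrightarrow> w \<in> quant_weights lam"
proof -
  assume lam: "lam \<ge> 2" and w: "w \<in> set (wsl lam m)"
  have "1 / real lam \<in> quant_weights lam" using lam unfolding quant_weights_def
    by (auto intro!: exI[of _ 1])
  moreover have "rho lam \<in> quant_weights lam" using lam unfolding quant_weights_def rho_def
    by (auto intro!: exI[of _ "lam - 1"])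
  moreover have "-1 \<in> quant_weights lam" by (simp add: quant_weights_def)
  ultimately show ?thesis using w by (auto simp: wsl_def split: if_splits)
qed

lemma sum_perm: "mset xs = mset ys \<Longrightarrow> sum_list (map g xs) = sum_list (map (g :: nat \<Rightarrow> real) ys)"
  by (metis mset_map sum_mset_sum_list)

lemma fl_sum:
  assumes lam: "lam \<ge> 2"
  shows "sum_list (map (\<lambda>l. snd l * nodeval lam x \<delta> l) (newlabels 0 (chF lam M) (SL (Suc L))))
    = (\<Sum>a<2 ^ Suc L. real_of_int (M a) * rho lam * relu (x - real a * \<delta>))"
proof -
  let ?LS = "SL (Suc L)"
  have mapeq: "map (\<lambda>p. real_of_int (M (fst (?LS ! p))) * rho lam * relu (x - real (fst (?LS ! p)) * \<delta>)) [0..<length ?LS]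
      = map (\<lambda>a. real_of_int (M a) * rho lam * relu (x - real a * \<delta>)) (map fst ?LS)"
    by (rule nth_equalityI) simp_all
  have "newlabels 0 (chF lam M) ?LS = concat (map (\<lambda>p. map (\<lambda>w. (fst (?LS ! p), w)) (wsl lam (M (fst (?LS ! p))))) [0..<length ?LS])"
    by (simp add: newlabels_def chF_def o_def)
  hence "sum_list (map (\<lambda>l. snd l * nodeval lam x \<delta> l) (newlabels 0 (chF lam M) ?LS))
     = sum_list (map (\<lambda>p. sum_list (map (\<lambda>w. w * (rho lam * relu (x - real (fst (?LS ! p)) * \<delta>))) (wsl lam (M (fst (?LS ! p)))))) [0..<length ?LS])"
    by (simp add: map_concat sl_concat o_def nodeval_def)
  also have "\<dots> = sum_list (map (\<lambda>p. real_of_int (M (fst (?LS ! p))) * rho lam * relu (x - real (fst (?LS ! p)) * \<delta>)) [0..<length ?LS])"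
  proof (rule arg_cong[of _ _ sum_list], rule map_cong[OF refl])
    fix p
    show "sum_list (map (\<lambda>w. w * (rho lam * relu (x - real (fst (?LS ! p)) * \<delta>))) (wsl lam (M (fst (?LS ! p)))))
      = real_of_int (M (fst (?LS ! p))) * rho lam * relu (x - real (fst (?LS ! p)) * \<delta>)"
      unfolding sum_list_mult_const map_ident wsl_sum[OF lam] by (simp only: mult.assoc)
  qed
  also have "\<dots> = sum_list (map (\<lambda>a. real_of_int (M a) * rho lam * relu (x - real a * \<delta>)) (map fst ?LS))"
    using mapeq by simp
  also have "\<dots> = sum_list (map (\<lambda>a. real_of_int (M a) * rho lam * relu (x - real a * \<delta>)) [0..<2 ^ Suc L])"
    by (rule sum_perm) (use SL_props in blast)
  also have "\<dots> = (\<Sum>a<2 ^ Suc L. real_of_int (M a) * rho lam * relu (x - real a * \<delta>))"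
    by (simp add: sum_list_distinct_conv_sum_set atLeast0LessThan)
  finally show ?thesis .
qed


abbreviation "fll lam L M \<equiv> flabels [(0, 0)] (dsl lam L M)"

lemma dsl_fst: "\<forall>i<length (dsl lam L M). fst (dsl lam L M ! i) < L + 3"
proof (intro allI impI)
  fix i assume i: "i < length (dsl lam L M)"
  show "fst (dsl lam L M ! i) < L + 3"
  proof (cases "i < L")
    case True thus ?thesis by (simp add: dsl_def nth_append)
  next
    case False
    show ?thesis
    proof (cases "i < L + Suc L")
      case True thus ?thesis using False by (simp add: dsl_def nth_append)
    next
      case False2: False
      hence "i = L + Suc L" using i by (simp add: length_dsl)
      thus ?thesis by (simp add: dsl_def nth_append)
    qed
  qed
qed

lemma netl_wfn: "wfn 1 (netl lam L Nc pos M)"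
proof -
  have o: "wfn (L + 3 + length (fll lam L M)) [outl lam L pos M]"
    by (auto simp: outl_def Let_def cedges_def)
  have b: "wfn (length (Nlist lam L Nc) + length [(0::nat, 0::real)]) (build lam (Nlist lam L Nc) 1 [(0, 0)] (dsl lam L M) @ [outl lam L pos M])"
    by (rule wfn_build) (use dsl_fst o in auto)
  have l1: "\<forall>u\<in>set (lay1 lam (Nlist lam L Nc)). \<forall>e\<in>set (snd u). fst e < 1"
    by (auto simp: lay1_def hu_def)
  have "length (lay1 lam (Nlist lam L Nc)) = length (Nlist lam L Nc) + length [(0::nat, 0::real)]"
    by (simp add: lay1_def)
  thus ?thesis using b l1 by (simp add: netl_def)
qed

lemma netl_ne: "netl lam L Nc pos M \<noteq> []" by (simp add: netl_def)
lemma netl_last: "length (last (netl lam L Nc pos M)) = 1" by (simp add: netl_def outl_def Let_def)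
lemma netl_length: "length (netl lam L Nc pos M) = 4 * L + 6"
  by (simp add: netl_def length_build length_dsl)

lemma ueval_append: "ueval v (b, es1 @ es2) = ueval v (b, es1) + sum_list (map (\<lambda>e. snd e * v ! fst e) es2)"
  by (simp add: ueval_def)

lemma netl_value:
  assumes lam: "lam \<ge> 2" and x: "0 \<le> x" "x \<le> 1"
  shows "realize (mknet 1 (netl lam L Nc pos M)) x =
     (if pos then 1 else -1) * hv lam Nc (4 * L + 5)
     + (\<Sum>a<2 ^ Suc L. real_of_int (M a) * rho lam * relu (x - real a * dlt lam L))"
proof -
  let ?Ns = "Nlist lam L Nc"
  let ?ds = "dsl lam L M"
  let ?fl = "fll lam L M"
  let ?\<delta> = "dlt lam L"
  have dpos: "?\<delta> \<ge> 0" by (simp add: dlt_def)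
  let ?v = "st lam ?Ns x ?\<delta> (4 * L + 5) ?fl"
  have e: "1 + 2 * length ?ds = 4 * L + 5" by (simp add: length_dsl)
  have hv1: "hev [x] (lay1 lam ?Ns # build lam ?Ns 1 [(0, 0)] ?ds) = ?v"
  proof -
    have "hev [x] (lay1 lam ?Ns # build lam ?Ns 1 [(0, 0)] ?ds) = hev (st lam ?Ns x ?\<delta> 1 [(0, 0)]) (build lam ?Ns 1 [(0, 0)] ?ds)"
      using lay1_eval[OF lam x(1) x(2), of ?Ns ?\<delta>] by (simp add: hev_Cons)
    also have "\<dots> = st lam ?Ns x ?\<delta> (1 + 2 * length ?ds) ?fl"
      by (rule build_eval[OF lam x dpos]) (use dsl_ok[OF lam] in auto)
    finally show ?thesis unfolding e .
  qed
  have r: "realize (mknet 1 (netl lam L Nc pos M)) x = tofun (neval [x] (netl lam L Nc pos M)) 0"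
    by (rule realize_mk[OF netl_wfn netl_ne])
  have "neval [x] (netl lam L Nc pos M) = lin ?v (outl lam L pos M)"
    unfolding netl_def neval_snoc hv1 ..
  hence val: "realize (mknet 1 (netl lam L Nc pos M)) x
     = ueval ?v (0, map (\<lambda>p. (L + 3 + p, snd (?fl ! p))) [0..<length ?fl] @ cedges lam L pos)"
    using r by (simp add: tofun_def lin_def outl_def Let_def ueval_def)
  have vn: "\<And>p. p < length ?fl \<Longrightarrow> ?v ! (L + 3 + p) = nodeval lam x ?\<delta> (?fl ! p)"
    using nth_st2[of _ ?fl lam ?Ns x ?\<delta> "4 * L + 5"] by simp
  have vc1: "?v ! Suc L = hv lam Nc (4 * L + 5)"
    using nth_st1[of "Suc L" ?Ns lam x ?\<delta> "4 * L + 5" ?fl] by (simp add: Nlist_c1)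
  have vc2: "?v ! Suc (Suc L) = hv lam Nc (4 * L + 5)"
    using nth_st1[of "Suc (Suc L)" ?Ns lam x ?\<delta> "4 * L + 5" ?fl] by (simp add: Nlist_c2)
  have s1: "ueval ?v (0, map (\<lambda>p. (L + 3 + p, snd (?fl ! p))) [0..<length ?fl])
      = sum_list (map (\<lambda>l. snd l * nodeval lam x ?\<delta> l) ?fl)"
  proof -
    have "map (\<lambda>e. snd e * ?v ! fst e) (map (\<lambda>p. (L + 3 + p, snd (?fl ! p))) [0..<length ?fl])
        = map (\<lambda>l. snd l * nodeval lam x ?\<delta> l) ?fl"
      by (rule nth_equalityI) (simp_all add: vn)
    thus ?thesis by (simp add: ueval_def)
  qed
  have s2: "sum_list (map (\<lambda>e. snd e * ?v ! fst e) (cedges lam L pos)) = (if pos then 1 else -1) * hv lam Nc (4 * L + 5)"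
  proof (cases pos)
    case True
    have "1 / real lam + rho lam = 1" using lam by (simp add: rho_def of_nat_diff field_simps)
    hence "1 / real lam * hv lam Nc (4 * L + 5) + rho lam * hv lam Nc (4 * L + 5) = hv lam Nc (4 * L + 5)"
      by (metis distrib_right mult_1)
    thus ?thesis using True vc1 vc2 by (simp add: cedges_def)
  next
    case False thus ?thesis using vc1 by (simp add: cedges_def)
  qed
  have "realize (mknet 1 (netl lam L Nc pos M)) x
      = sum_list (map (\<lambda>l. snd l * nodeval lam x ?\<delta> l) ?fl) + (if pos then 1 else -1) * hv lam Nc (4 * L + 5)"
    unfolding val ueval_append s1 s2 ..
  also have "sum_list (map (\<lambda>l. snd l * nodeval lam x ?\<delta> l) ?fl)
     = (\<Sum>a<2 ^ Suc L. real_of_int (M a) * rho lam * relu (x - real a * ?\<delta>))"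
    unfolding fl_eq by (rule fl_sum[OF lam])
  finally show ?thesis by simp
qed


lemma qw_basic:
  assumes lam: "lam \<ge> 2"
  shows "-1 \<in> quant_weights lam" "1 / real lam \<in> quant_weights lam" "rho lam \<in> quant_weights lam"
    "\<And>k. 1 \<le> k \<Longrightarrow> k < lam \<Longrightarrow> real k / real lam \<in> quant_weights lam"
proof -
  show "-1 \<in> quant_weights lam" by (simp add: quant_weights_def)
  show "1 / real lam \<in> quant_weights lam" using lam unfolding quant_weights_def
    by (auto intro!: exI[of _ 1])
  show "rho lam \<in> quant_weights lam" using lam unfolding quant_weights_def rho_def
    by (auto intro!: exI[of _ "lam - 1"])
  fix k :: nat assume "1 \<le> k" "k < lam"
  thus "real k / real lam \<in> quant_weights lam" unfolding quant_weights_def by auto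
qed

lemma good_hu: "lam \<ge> 2 \<Longrightarrow> u \<in> set (hu lam Ns t) \<Longrightarrow> goodu (quant_weights lam) u"
proof -
  assume lam: "lam \<ge> 2" and u: "u \<in> set (hu lam Ns t)"
  then obtain h where h: "u = (real (dig lam (Ns ! h) (t - 1)) / real lam, if t = Suc 0 then [] else [(h, 1 / real lam)])"
    by (auto simp: hu_def)
  have "dig lam (Ns ! h) (t - 1) < lam" using lam by (simp add: dig_def)
  hence "real (dig lam (Ns ! h) (t - 1)) / real lam \<noteq> 0 \<longrightarrow> real (dig lam (Ns ! h) (t - 1)) / real lam \<in> quant_weights lam"
    using qw_basic(4)[OF lam, of "dig lam (Ns ! h) (t - 1)"] by auto
  thus ?thesis using h qw_basic[OF lam] by (auto simp: goodu_def)
qed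

lemma good_build:
  assumes lam: "lam \<ge> 2"
  shows "(\<forall>i<length ds. fst (ds ! i) < length Ns) \<Longrightarrow> \<forall>us\<in>set (build lam Ns t labels ds). \<forall>u\<in>set us. goodu (quant_weights lam) u"
proof (induction ds arbitrary: t labels)
  case Nil thus ?case by simp
next
  case (Cons dd ds)
  obtain c s ch where dd: "dd = (c, s, ch)" by (cases dd) auto
  have cc: "c < length Ns" using Cons.prems dd by (metis fst_conv length_greater_0_conv list.discI nth_Cons_0)
  have r: "\<forall>i<length ds. fst (ds ! i) < length Ns" using Cons.prems by auto
  have a: "\<forall>u\<in>set (alayer lam Ns labels t). goodu (quant_weights lam) u"
  proof
    fix u assume "u \<in> set (alayer lam Ns labels t)"
    hence "u \<in> set (hu lam Ns (Suc t)) \<or> (\<exists>p. u = (rho lam, [(length Ns + p, -1)]))" by (auto simp: alayer_def)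
    thus "goodu (quant_weights lam) u"
    proof
      assume "u \<in> set (hu lam Ns (Suc t))" thus ?thesis by (rule good_hu[OF lam])
    next
      assume "\<exists>p. u = (rho lam, [(length Ns + p, -1)])"
      thus ?thesis using qw_basic[OF lam] by (auto simp: goodu_def)
    qed
  qed
  have b: "\<forall>u\<in>set (clayer lam Ns c ch labels t). goodu (quant_weights lam) u"
  proof
    fix u assume "u \<in> set (clayer lam Ns c ch labels t)"
    hence "u \<in> set (hu lam Ns (Suc (Suc t))) \<or> (\<exists>p. u = (rho lam, [(length Ns + p, -1), (c, -1)]) \<or> u = (rho lam, [(length Ns + p, -1)]))"
      by (auto simp: clayer_def)
    thus "goodu (quant_weights lam) u"
    proof
      assume "u \<in> set (hu lam Ns (Suc (Suc t)))" thus ?thesis by (rule good_hu[OF lam])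
    next
      assume "\<exists>p. u = (rho lam, [(length Ns + p, -1), (c, -1)]) \<or> u = (rho lam, [(length Ns + p, -1)])"
      thus ?thesis using qw_basic[OF lam] cc by (auto simp: goodu_def)
    qed
  qed
  show ?case using a b Cons.IH[OF r] dd by auto
qed


lemma fl_weights: "lam \<ge> 2 \<Longrightarrow> l \<in> set (fll lam L M) \<Longrightarrow> snd l \<in> quant_weights lam"
  unfolding fl_eq by (auto simp: newlabels_def chF_def intro: wsl_in)

lemma netl_weights:
  assumes lam: "lam \<ge> 2"
  shows "weights_in (quant_weights lam) (mknet 1 (netl lam L Nc pos M))"
proof (rule weights_in_mk)
  have l1: "\<forall>u\<in>set (lay1 lam (Nlist lam L Nc)). goodu (quant_weights lam) u"
    using good_hu[OF lam] qw_basic[OF lam] by (auto simp: lay1_def goodu_def)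
  have b: "\<forall>us\<in>set (build lam (Nlist lam L Nc) 1 [(0, 0)] (dsl lam L M)). \<forall>u\<in>set us. goodu (quant_weights lam) u"
    by (rule good_build[OF lam]) (use dsl_fst in auto)
  have o: "\<forall>u\<in>set (outl lam L pos M). goodu (quant_weights lam) u"
  proof -
    let ?fl = "fll lam L M"
    have d: "distinct (map fst (map (\<lambda>p. (L + 3 + p, snd (?fl ! p))) [0..<length ?fl] @ cedges lam L pos))"
      by (auto simp: cedges_def distinct_map inj_on_def)
    have w: "\<forall>e\<in>set (map (\<lambda>p. (L + 3 + p, snd (?fl ! p))) [0..<length ?fl] @ cedges lam L pos). snd e \<in> quant_weights lam"
      using qw_basic[OF lam] by (auto simp: cedges_def intro!: fl_weights[OF lam] nth_mem)
    show ?thesis using d w by (simp add: outl_def Let_def goodu_def)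
  qed
  show "\<forall>us\<in>set (netl lam L Nc pos M). \<forall>u\<in>set us. goodu (quant_weights lam) u"
    using l1 b o by (auto simp: netl_def)
qed

lemma bcost_copy: "bcost H [(0, 0)] (replicate k (0, 0, chC)) = k * (5 * H + 5)"
  by (induction k) (simp_all add: newlabels_chC)

lemma bcost_split: "bcost H [(0, 0)] (map (\<lambda>j. (j, 2 ^ j, chS)) [0..<k]) \<le> 5 * H * k + 8 * 2 ^ k"
proof (induction k)
  case 0 thus ?case by simp
next
  case (Suc k)
  have ln: "length (newlabels (2 ^ k) chS (SL k)) = 2 * 2 ^ k"
    using SL_props[of "Suc k"] by (simp add: SL_Suc)
  have "bcost H [(0, 0)] (map (\<lambda>j. (j, 2 ^ j, chS)) [0..<Suc k])
     = bcost H [(0, 0)] (map (\<lambda>j. (j, 2 ^ j, chS)) [0..<k]) + bcost H (SL k) [(k, 2 ^ k, chS)]"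
    by (simp add: bcost_append SL_def)
  also have "bcost H (SL k) [(k, 2 ^ k, chS)] = 5 * H + 2 * 2 ^ k + 3 * (2 * 2 ^ k)"
    using ln SL_props[of k] by simp
  finally show ?case using Suc.IH by simp
qed

lemma sl_le: "(\<forall>x\<in>set xs. f x \<le> (k::nat)) \<Longrightarrow> sum_list (map f xs) \<le> k * length xs"
  by (induction xs) auto

lemma len_fl:
  assumes M: "\<forall>a. \<bar>M a\<bar> \<le> 4"
  shows "length (fll lam L M) \<le> 8 * 2 ^ Suc L"
proof -
  have "length (newlabels 0 (chF lam M) (SL (Suc L))) = sum_list (map (\<lambda>p. length (chF lam M (SL (Suc L) ! p))) [0..<length (SL (Suc L))])"
    by (rule length_newlabels)
  also have "\<dots> \<le> 8 * length [0..<length (SL (Suc L))]"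
    by (rule sl_le) (use M wsl_len in \<open>auto simp: chF_def\<close>)
  finally show ?thesis unfolding fl_eq using SL_props[of "Suc L"] by simp
qed

lemma netl_cost:
  assumes M: "\<forall>a. \<bar>M a\<bar> \<le> 4"
  shows "num_weights (mknet 1 (netl lam L Nc pos M)) \<le> 10 * (L + 3) ^ 2 + 84 * 2 ^ L"
proof -
  let ?Ns = "Nlist lam L Nc"
  let ?H = "L + 3"
  have c1: "lcost (lay1 lam ?Ns) \<le> 2 * (L + 4)"
  proof -
    have "\<forall>u\<in>set (lay1 lam ?Ns). ucost u \<le> 2" by (auto simp: lay1_def hu_def ucost_def)
    hence "lcost (lay1 lam ?Ns) \<le> 2 * length (lay1 lam ?Ns)" by (rule lcost_le)
    thus ?thesis by (simp add: lay1_def)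
  qed
  have c2: "sum_list (map lcost (build lam ?Ns 1 [(0, 0)] (dsl lam L M))) \<le>
      L * (5 * ?H + 5) + (5 * ?H * Suc L + 8 * 2 ^ Suc L) + (5 * ?H + 2 * 2 ^ Suc L + 3 * (8 * 2 ^ Suc L))"
  proof -
    have "sum_list (map lcost (build lam ?Ns 1 [(0, 0)] (dsl lam L M))) \<le> bcost ?H [(0, 0)] (dsl lam L M)"
      using cost_build[of lam ?Ns 1 "[(0, 0)]" "dsl lam L M"] by simp
    also have "\<dots> = bcost ?H [(0, 0)] (replicate L (0, 0, chC)) + bcost ?H [(0, 0)] (map (\<lambda>j. (j, 2 ^ j, chS)) [0..<Suc L])
        + bcost ?H (SL (Suc L)) [(0, 0, chF lam M)]"
      by (simp add: dsl_def bcost_append flabels_copy SL_def flabels_append)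
    also have "bcost ?H (SL (Suc L)) [(0, 0, chF lam M)] = 5 * ?H + 2 * length (SL (Suc L)) + 3 * length (fll lam L M)"
      by (simp add: fl_eq)
    finally show ?thesis using bcost_copy[of ?H L] bcost_split[of ?H "Suc L"] len_fl[OF M, of lam L] SL_props[of "Suc L"]
      by linarith
  qed
  have c3: "lcost (outl lam L pos M) \<le> 8 * 2 ^ Suc L + 2"
  proof -
    have "lcost (outl lam L pos M) = length (fll lam L M) + length (cedges lam L pos)"
      by (simp add: outl_def Let_def lcost_def ucost_def)
    moreover have "length (cedges lam L pos) \<le> 2" by (simp add: cedges_def)
    ultimately show ?thesis using len_fl[OF M, of lam L] by linarith
  qed
  have "num_weights (mknet 1 (netl lam L Nc pos M)) \<le> sum_list (map lcost (netl lam L Nc pos M))"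
    by (rule num_weights_mk)
  also have "\<dots> = lcost (lay1 lam ?Ns) + sum_list (map lcost (build lam ?Ns 1 [(0, 0)] (dsl lam L M))) + lcost (outl lam L pos M)"
    by (simp add: netl_def)
  also have "\<dots> \<le> 10 * (L + 3) ^ 2 + 84 * 2 ^ L"
    using c1 c2 c3 by (simp add: power2_eq_square algebra_simps)
  finally show ?thesis .
qed


lemma sq_bound: "(L + 3) ^ 2 \<le> 16 * 2 ^ (L::nat)"
proof (induction L)
  case 0 thus ?case by simp
next
  case (Suc L)
  have "(Suc L + 3) ^ 2 = (L + 3) ^ 2 + 2 * L + 7" by (simp add: power2_eq_square algebra_simps)
  also have "\<dots> \<le> 2 * (L + 3) ^ 2"
  proof -
    have "3 * (L + 3) \<le> (L + 3) * (L + 3)" by (rule mult_right_mono) auto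
    thus ?thesis by (simp add: power2_eq_square)
  qed
  also have "\<dots> \<le> 16 * 2 ^ Suc L" using Suc.IH by simp
  finally show ?case .
qed

lemma choose_L:
  fixes \<epsilon> :: real
  assumes e: "0 < \<epsilon>" "\<epsilon> < 1"
  obtains L :: nat where "6 / \<epsilon> \<le> real (2 ^ L)" "real (2 ^ L) < 12 / \<epsilon>" "real L \<le> log 2 (1 / \<epsilon>) + 4"
proof -
  define y where "y = log 2 (6 / \<epsilon>)"
  have y6: "6 / \<epsilon> > 1" using e by (simp add: field_simps)
  have ypos: "y > 0" using y6 e by (simp add: y_def)
  define L where "L = nat \<lceil>y\<rceil>"
  have L1: "real L \<ge> y" using ypos by (simp add: L_def)
  have L2: "real L < y + 1" using ypos by (simp add: L_def) linarith
  have p: "real (2 ^ L) = 2 powr real L" by (simp add: powr_realpow)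
  have "2 powr y = 6 / \<epsilon>" using y6 e by (simp add: y_def)
  moreover have "2 powr y \<le> 2 powr real L" using L1 by simp
  ultimately have a: "6 / \<epsilon> \<le> real (2 ^ L)" using p by simp
  have "2 powr real L < 2 powr (y + 1)" using L2 by simp
  also have "2 powr (y + 1) = 12 / \<epsilon>" using y6 e by (simp add: y_def powr_add)
  finally have b: "real (2 ^ L) < 12 / \<epsilon>" using p by simp
  have "6 / \<epsilon> = 6 * (1 / \<epsilon>)" by simp
  hence "y = log 2 6 + log 2 (1 / \<epsilon>)" using e log_mult_pos[of 6 "1 / \<epsilon>" 2] unfolding y_def by simp
  moreover have "log 2 6 \<le> 3"
  proof -
    have "log 2 6 \<le> log 2 8" by simp
    also have "log 2 8 = 3"
    proof -
      have "log 2 ((2::real) ^ 3) = real 3" by (rule log_pow_cancel) auto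
      thus ?thesis by simp
    qed
    finally show ?thesis .
  qed
  ultimately have c: "real L \<le> log 2 (1 / \<epsilon>) + 4" using L2 by linarith
  show ?thesis using that a b c by blast
qed

lemma delta_props:
  assumes lam: "lam \<ge> 2"
  shows "dlt lam L > 0" "dlt lam L \<le> 1 / real (2 ^ L)" "real (2 ^ Suc L) * dlt lam L \<ge> 1"
proof -
  let ?q = "qq lam L"
  have le: "2 ^ L \<le> lam ^ L" using lam by (intro power_mono) auto
  have q1: "?q \<ge> 1"
  proof -
    have "2 ^ L div 2 ^ L \<le> lam ^ L div 2 ^ L" using le by (rule div_le_mono)
    thus ?thesis by (simp add: qq_def)
  qed
  have qle: "2 ^ L * ?q \<le> lam ^ L" by (rule qq_le)
  have "lam ^ L = ?q * 2 ^ L + lam ^ L mod 2 ^ L" by (metis qq_def div_mult_mod_eq)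
  moreover have "lam ^ L mod 2 ^ L < 2 ^ L" by simp
  ultimately have "lam ^ L < ?q * 2 ^ L + 2 ^ L" by linarith
  also have "\<dots> \<le> 2 ^ Suc L * ?q" using q1 by (simp add: algebra_simps)
  finally have lt: "lam ^ L < 2 ^ Suc L * ?q" .
  have Lp: "real (lam ^ L) > 0" using lam by simp
  show "dlt lam L > 0" using q1 Lp by (simp add: dlt_def)
  have "real (2 ^ L) * real ?q \<le> real (lam ^ L)" using qle by (metis of_nat_le_iff of_nat_mult)
  thus "dlt lam L \<le> 1 / real (2 ^ L)" using Lp by (simp add: dlt_def field_simps)
  have "real (lam ^ L) \<le> real (2 ^ Suc L) * real ?q" using lt by (metis less_imp_le of_nat_le_iff of_nat_mult)
  thus "real (2 ^ Suc L) * dlt lam L \<ge> 1" using Lp by (simp add: dlt_def field_simps)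
qed

lemma main_lemma:
  assumes lam: "lam \<ge> 2" and f: "f \<in> F11" and e: "0 < \<epsilon>" "\<epsilon> < 1"
  shows "\<exists>N. relu_net N \<and> weights_in (quant_weights lam) N \<and>
           (\<forall>x\<in>{0..1}. \<bar>realize N x - f x\<bar> \<le> \<epsilon>) \<and>
           real (depth N) \<le> 3000 * (1 + log 2 (1 / \<epsilon>)) \<and>
           real (num_weights N) \<le> 3000 / \<epsilon> \<and>
           num_bits lam N \<le> 3000 * log 2 (real lam) / \<epsilon>"
proof -
  obtain L :: nat where L1: "6 / \<epsilon> \<le> real (2 ^ L)" and L2: "real (2 ^ L) < 12 / \<epsilon>"
    and L3: "real L \<le> log 2 (1 / \<epsilon>) + 4"
    using choose_L[OF e] by blast
  note fp = F11_props[OF f]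
  define \<delta> where "\<delta> = dlt lam L"
  have dpos: "\<delta> > 0" and dle: "\<delta> \<le> 1 / real (2 ^ L)" and dn: "real (2 ^ Suc L) * \<delta> \<ge> 1"
    using delta_props[OF lam, of L] by (simp_all add: \<delta>_def)
  have p2: "real (2 ^ L) > 0" by simp
  have deps: "6 * \<delta> \<le> \<epsilon>"
  proof -
    have "6 * \<delta> \<le> 6 / real (2 ^ L)" using dle by (simp add: divide_simps)
    also have "\<dots> \<le> \<epsilon>" using L1 e p2 by (simp add: field_simps)
    finally show ?thesis .
  qed
  define T where "T = 4 * L + 5"
  define P where "P = lam ^ T"
  have Ppos: "P > 0" using lam by (simp add: P_def)
  have PT: "real (2 ^ Suc L) \<le> real P"
  proof -
    have "2 ^ Suc L \<le> (2::nat) ^ T" by (rule power_increasing) (auto simp: T_def)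
    also have "\<dots> \<le> lam ^ T" using lam by (intro power_mono) auto
    finally have "2 ^ Suc L \<le> P" by (simp add: P_def)
    thus ?thesis by (simp only: of_nat_le_iff)
  qed
  have invP: "1 / real P \<le> \<delta>"
  proof -
    have "1 / real P \<le> 1 / real (2 ^ Suc L)" using PT Ppos by (intro divide_left_mono) auto
    also have "\<dots> \<le> \<delta>" using dn by (simp add: field_simps)
    finally show ?thesis .
  qed
  define Nc where "Nc = min (nat \<lfloor>\<bar>f 0\<bar> * real P\<rfloor>) (P - 1)"
  have NcP: "Nc < P" using Ppos by (simp add: Nc_def)
  have Nc1: "real Nc \<le> \<bar>f 0\<bar> * real P"
  proof -
    have "Nc \<le> nat \<lfloor>\<bar>f 0\<bar> * real P\<rfloor>" by (simp add: Nc_def)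
    hence "real Nc \<le> real (nat \<lfloor>\<bar>f 0\<bar> * real P\<rfloor>)" by (simp only: of_nat_le_iff)
    also have "\<dots> \<le> \<bar>f 0\<bar> * real P" by (simp add: of_nat_nat)
    finally show ?thesis .
  qed
  have Nc2: "real Nc \<ge> \<bar>f 0\<bar> * real P - 1"
  proof -
    have a: "real (nat \<lfloor>\<bar>f 0\<bar> * real P\<rfloor>) \<ge> \<bar>f 0\<bar> * real P - 1"
      by (simp add: of_nat_nat)
    have "\<bar>f 0\<bar> * real P \<le> real P" using fp(2) Ppos by (simp add: mult_left_le_one_le)
    hence b: "real (P - 1) \<ge> \<bar>f 0\<bar> * real P - 1" using Ppos by (simp add: of_nat_diff)
    show ?thesis using a b by (cases "nat \<lfloor>\<bar>f 0\<bar> * real P\<rfloor> \<le> P - 1") (simp_all add: Nc_def min_def)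
  qed
  define \<kappa> where "\<kappa> = hv lam Nc T"
  have kap: "\<kappa> = real Nc / real P" using NcP by (simp add: \<kappa>_def hv_small P_def)
  have kap1: "\<bar>\<kappa> - \<bar>f 0\<bar>\<bar> \<le> \<delta>"
  proof -
    have "\<kappa> \<le> \<bar>f 0\<bar>" using Nc1 Ppos by (simp add: kap field_simps)
    moreover have "\<kappa> \<ge> \<bar>f 0\<bar> - 1 / real P"
    proof -
      have "real Nc / real P \<ge> (\<bar>f 0\<bar> * real P - 1) / real P" by (rule divide_right_mono[OF Nc2]) simp
      moreover have "(\<bar>f 0\<bar> * real P - 1) / real P = \<bar>f 0\<bar> - 1 / real P" using Ppos by (simp add: field_simps)
      ultimately show ?thesis by (simp add: kap)
    qed
    ultimately show ?thesis using invP by (simp add: abs_le_iff)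
  qed
  define pos where "pos = (f 0 \<ge> 0)"
  define c0 where "c0 = (if pos then 1 else -1) * \<kappa>"
  define F where "F = (\<lambda>t. f (min t 1))"
  have c0F: "\<bar>c0 - F 0\<bar> \<le> \<delta>" using kap1 by (auto simp: c0_def F_def pos_def abs_le_iff)
  have lipF: "\<And>s t. 0 \<le> s \<Longrightarrow> 0 \<le> t \<Longrightarrow> \<bar>F s - F t\<bar> \<le> \<bar>s - t\<bar>"
  proof -
    fix s t :: real assume "0 \<le> s" "0 \<le> t"
    hence "\<bar>F s - F t\<bar> \<le> \<bar>min s 1 - min t 1\<bar>" using fp(1) by (simp add: F_def)
    also have "\<dots> \<le> \<bar>s - t\<bar>" by (auto simp: abs_le_iff min_def abs_if)
    finally show "\<bar>F s - F t\<bar> \<le> \<bar>s - t\<bar>" .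
  qed
  define \<sigma> where "\<sigma> = 2 * rho lam"
  have sig: "\<sigma> \<ge> 1" "\<sigma> < 2" using rho_props[OF lam] by (auto simp: \<sigma>_def)
  define M where "M = Mm F c0 \<sigma> \<delta>"
  have Mb: "\<forall>a. \<bar>M a\<bar> \<le> 4" by (simp add: M_def Mm_bound)
  define N where "N = mknet 1 (netl lam L Nc pos M)"
  have approx: "\<forall>x\<in>{0..1}. \<bar>realize N x - f x\<bar> \<le> \<epsilon>"
  proof
    fix x :: real assume x: "x \<in> {0..1}"
    have "realize N x = (if pos then 1 else -1) * hv lam Nc (4 * L + 5)
        + (\<Sum>a<2 ^ Suc L. real_of_int (M a) * rho lam * relu (x - real a * dlt lam L))"
      unfolding N_def by (rule netl_value[OF lam]) (use x in auto)
    also have "\<dots> = appr F c0 \<sigma> \<delta> (2 ^ Suc L) x"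
      unfolding appr_def c0_def \<kappa>_def T_def M_def \<delta>_def \<sigma>_def
      by (intro arg_cong2[where f="(+)"] refl sum.cong) auto
    finally have r: "realize N x = appr F c0 \<sigma> \<delta> (2 ^ Suc L) x" .
    have xn: "x \<le> real (2 ^ Suc L) * \<delta>" using x dn by auto
    have "\<bar>appr F c0 \<sigma> \<delta> (2 ^ Suc L) x - F x\<bar> \<le> (2 * \<sigma> + 2) * \<delta>"
      by (rule appr_error[OF lipF dpos sig(1) c0F]) (use x xn in auto)
    also have "\<dots> \<le> 6 * \<delta>" using sig dpos by (intro mult_right_mono) auto
    finally show "\<bar>realize N x - f x\<bar> \<le> \<epsilon>" using r deps x by (simp add: F_def)
  qed
  have lg: "log 2 (1 / \<epsilon>) \<ge> 0" using e by simp
  have dep: "real (depth N) \<le> 3000 * (1 + log 2 (1 / \<epsilon>))"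
  proof -
    have "depth N = 4 * L + 6" by (simp add: N_def depth_def netl_length)
    hence "real (depth N) = 4 * real L + 6" by simp
    also have "\<dots> \<le> 4 * (log 2 (1 / \<epsilon>) + 4) + 6" using L3 by simp
    also have "\<dots> \<le> 3000 * (1 + log 2 (1 / \<epsilon>))" using lg by simp
    finally show ?thesis .
  qed
  have nw: "real (num_weights N) \<le> 3000 / \<epsilon>"
  proof -
    have "num_weights N \<le> 10 * (L + 3) ^ 2 + 84 * 2 ^ L" unfolding N_def by (rule netl_cost[OF Mb])
    also have "\<dots> \<le> 244 * 2 ^ L" using sq_bound[of L] by simp
    finally have "real (num_weights N) \<le> 244 * real (2 ^ L)" by (metis of_nat_le_iff of_nat_mult of_nat_numeral)
    also have "\<dots> \<le> 244 * (12 / \<epsilon>)" using L2 by simp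
    also have "\<dots> \<le> 3000 / \<epsilon>" using e by (simp add: divide_simps)
    finally show ?thesis .
  qed
  have l2: "log 2 (real lam) \<ge> 0" using lam by simp
  have nb: "num_bits lam N \<le> 3000 * log 2 (real lam) / \<epsilon>"
  proof -
    have "num_bits lam N = real (num_weights N) * log 2 (real lam)" by (simp add: num_bits_def)
    also have "\<dots> \<le> 3000 / \<epsilon> * log 2 (real lam)" using nw l2 by (rule mult_right_mono)
    finally show ?thesis by simp
  qed
  have rn: "relu_net N" unfolding N_def by (rule relu_net_mk[OF netl_ne netl_last])
  have wi: "weights_in (quant_weights lam) N" unfolding N_def by (rule netl_weights[OF lam])
  show ?thesis using rn wi approx dep nw nb by blast
qed

theorem theorem4:
  shows "\<exists>C>0. \<forall>lam::nat. lam \<ge> 2 \<longrightarrow>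
    (\<forall>f\<in>F11. \<forall>\<epsilon>::real. 0 < \<epsilon> \<and> \<epsilon> < 1 \<longrightarrow>
      (\<exists>N. relu_net N \<and> weights_in (quant_weights lam) N \<and>
           (\<forall>x\<in>{0..1}. \<bar>realize N x - f x\<bar> \<le> \<epsilon>) \<and>
           real (depth N) \<le> C * (1 + log 2 (1 / \<epsilon>)) \<and>
           real (num_weights N) \<le> C / \<epsilon> \<and>
           num_bits lam N \<le> C * log 2 (real lam) / \<epsilon>))"
  by (rule exI[of _ 3000]) (use main_lemma in auto)


end
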